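(* Let $M$ be a stable matching of the induced continuum market $\widehat\Gamma$, and let $B$ and $B^{*f}$ ($f\in\widetilde F$) be the matrices constructed from $M$ as below, with $N=\sum_{f\in\widetilde F}cl(f)$. If the firms' demand type $\mathcal D$ is totally unimodular, then there exists $\mathbf z=(\mathbf z^{f_1},\dots,\mathbf z^{f_m},\mathbf z^{\o})\in\{0,1\}^N$, with $\mathbf z^f\in\{0,1\}^{cl(f)}$, such that $B\mathbf z=\mathbf 1$ (the all-ones vector in $\mathbb R^{m+n}$), and the pseudo-matching $M'$ given by $M'_f=\sum_{j=1}^{cl(f)}z^f_jB^{*f}_j$ for each $f\in\widetilde F$ is a stable integral matching in $\widehat\Gamma$, where $B^{*f}_j$ denotes the $j$-th column of $B^{*f}$.
   Context: Finite firms $F=\{f_1,\dots,f_m\}$, finite workers $W=\{w_1,\dots,w_n\}$, null firm $\o$, $\widetilde F=F\cup\{\o\}$; each worker $w$ has a strict complete transitive preference $\succ_w$ over $\widetilde F$ ($f\succeq_w f'$ means $f\succ_w f'$ or $f=f'$); each firm $f\in F$ has a strict complete transitive preference $\succ_f$ over $2^W$, subsets identified with indicator vectors; $Ch_f(S)$ is the $\succ_f$-best subset of $S$. Demand type: $\mathcal D_f=\{\mathbf d\in\{-1,0,1\}^W:\mathbf d\ne\mathbf 0,\ \mathbf d=ind(Ch_f(S))-ind(Ch_f(S'))$ for some $S'\subsetneq S\subseteq W\}$, $\mathcal D=\bigcup_{f\in F}\mathcal D_f$; a set of vectors is totally unimodular if the matrix with them as columns has all square subdeterminants in $\{0,\pm1\}$.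 Continuum market $\widehat\Gamma$: for $f\in F$ list the sets $S\succ_f\emptyset$ as $\mathbf u^1\succ_f\cdots\succ_f\mathbf u^L$; for $\mathbf x\in[0,1]^W$: $t_0=0$, $\mathbf z^0=\mathbf x$, $t_k=\min\{1-\sum_{j<k}t_j,\ z^{k-1}_i:u^k_i\ne0\}$, $\mathbf z^k=\mathbf z^{k-1}-t_k\mathbf u^k$, $\widehat{Ch}_f(\mathbf x)=\sum_k t_k\mathbf u^k$; $\widehat{Ch}_{\o}(\mathbf x)=\mathbf x$. A pseudo-matching is $M=(M_f)_{f\in\widetilde F}$, $M_f\in[0,1]^W$; it is a matching if $\sum_{f\in\widetilde F}M_f(w)=1$ for all $w$, and integral if all entries are in $\{0,1\}$. $M''\succ_f M_f$ means $M''=\widehat{Ch}_f(M''\vee M_f)$ and $M''\ne M_f$ ($\vee$ componentwise max). $A^{\preceq f}(M)(w)=\sum_{f'\in\widetilde F:f\succeq_w f'}M_{f'}(w)$. $M$ is stable if (i) $M_f=\widehat{Ch}_f(M_f)$ for all $f\in F$ and $M_f(w)=0$ whenever $\o\succ_w f$; (ii) no $f\in F$, $M''\in[0,1]^W$ with $M''\succ_f M_f$ and $M''\le A^{\preceq f}(M)$. Construction: for $f\in F$, with $t_1,\dots,t_L$ from the procedure computing $\widehat{Ch}_f(M_f)$, let $k_1<\dots<k_s$ be the indices with $t_{k_l}>0$; $B^{*f}=[\mathbf u^{k_1},\dots,\mathbf u^{k_s}]$ if $\sum_{j=1}^Lt_j=1$, and $B^{*f}=[\mathbf u^{k_1},\dots,\mathbf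 u^{k_s},\mathbf 0]$ if $\sum_{j=1}^Lt_j<1$ (an $n\times cl(f)$ matrix). For $f=f_i$, $B^f$ is the $(m+n)\times cl(f)$ matrix whose every column has the $i$-th unit vector of $\mathbb R^m$ as its first $m$ entries and the corresponding column of $B^{*f}$ as its last $n$ entries. $B^{\o}$ has as columns the unit vectors $e_{m+j}\in\mathbb R^{m+n}$ for each $j$ with $M_{\o}(w_j)>0$ (in increasing $j$), $cl(\o)$ being their number, and $B^{*\o}$ consists of the last $n$ rows of $B^{\o}$. Finally $B=[B^{f_1},\dots,B^{f_m},B^{\o}]$. *)

theory Defs
  imports Main "Jordan_Normal_Form.Determinant"
begin

(* Firms: type 'f (finite); null firm \<o> = None, real firm f = Some f.
   Workers: type 'w (finite, linearly ordered = the enumeration w_1,...,w_n). *)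

definition strict_total :: "('a \<Rightarrow> 'a \<Rightarrow> bool) \<Rightarrow> bool" where
  "strict_total P \<longleftrightarrow> (\<forall>x. \<not> P x x) \<and> (\<forall>x y z. P x y \<longrightarrow> P y z \<longrightarrow> P x z)
     \<and> (\<forall>x y. x \<noteq> y \<longrightarrow> P x y \<or> P y x)"

definition ind :: "'w set \<Rightarrow> 'w \<Rightarrow> real" where
  "ind S = (\<lambda>w. if w \<in> S then 1 else 0)"

definition indI :: "'w set \<Rightarrow> 'w \<Rightarrow> int" where
  "indI S = (\<lambda>w. if w \<in> S then 1 else 0)"

definition Ch :: "('w set \<Rightarrow> 'w set \<Rightarrow> bool) \<Rightarrow> 'w set \<Rightarrow> 'w set" where
  "Ch P S = (THE T. T \<subseteq> S \<and> (\<forall>T'. T' \<subseteq> S \<and> T' \<noteq> T \<longrightarrow> P T T'))"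

definition demand_type :: "('w set \<Rightarrow> 'w set \<Rightarrow> bool) \<Rightarrow> ('w \<Rightarrow> int) set" where
  "demand_type P = {d. (\<forall>w. d w \<in> {-1, 0, 1}) \<and> d \<noteq> (\<lambda>_. 0) \<and>
     (\<exists>S S'. S' \<subset> S \<and> d = (\<lambda>w. indI (Ch P S) w - indI (Ch P S') w))}"

definition totally_unimodular :: "('w \<Rightarrow> int) set \<Rightarrow> bool" where
  "totally_unimodular V \<longleftrightarrow>
     (\<forall>k (rs :: 'w list) (cs :: ('w \<Rightarrow> int) list).
        distinct rs \<and> length rs = k \<and> distinct cs \<and> length cs = k \<and> set cs \<subseteq> V \<longrightarrow>
        det (mat k k (\<lambda>(i, j). (cs ! j) (rs ! i))) \<in> {-1, 0, 1})"

definition acc_list :: "('w set \<Rightarrow> 'w set \<Rightarrow> bool) \<Rightarrow> 'w set list" where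
  "acc_list P = (SOME us. sorted_wrt P us \<and> set us = {S. P S {}})"

(* the t_k of the procedure; s = sum of previous t_j, z = current residual *)
fun ch_ts :: "'w set list \<Rightarrow> ('w \<Rightarrow> real) \<Rightarrow> real \<Rightarrow> real list" where
  "ch_ts [] z s = []"
| "ch_ts (u # us) z s =
     (let t = Min (insert (1 - s) (z ` u))
      in t # ch_ts us (\<lambda>i. z i - t * ind u i) (s + t))"

definition ts_of :: "('w set \<Rightarrow> 'w set \<Rightarrow> bool) \<Rightarrow> ('w \<Rightarrow> real) \<Rightarrow> real list" where
  "ts_of P x = ch_ts (acc_list P) x 0"

definition chhat :: "('w set \<Rightarrow> 'w set \<Rightarrow> bool) \<Rightarrow> ('w \<Rightarrow> real) \<Rightarrow> 'w \<Rightarrow> real" where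
  "chhat P x = (\<lambda>w. \<Sum>k<length (acc_list P). ts_of P x ! k * ind (acc_list P ! k) w)"

definition is_pseudo :: "('f option \<Rightarrow> 'w \<Rightarrow> real) \<Rightarrow> bool" where
  "is_pseudo M \<longleftrightarrow> (\<forall>f w. 0 \<le> M f w \<and> M f w \<le> 1)"

definition is_matching :: "('f::finite option \<Rightarrow> 'w \<Rightarrow> real) \<Rightarrow> bool" where
  "is_matching M \<longleftrightarrow> is_pseudo M \<and> (\<forall>w. (\<Sum>f\<in>UNIV. M f w) = 1)"

definition integral :: "('f option \<Rightarrow> 'w \<Rightarrow> real) \<Rightarrow> bool" where
  "integral M \<longleftrightarrow> (\<forall>f w. M f w \<in> {0, 1})"

definition firm_prefers :: "('w set \<Rightarrow> 'w set \<Rightarrow> bool) \<Rightarrow> ('w \<Rightarrow> real) \<Rightarrow> ('w \<Rightarrow> real) \<Rightarrow> bool" where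
  "firm_prefers P M'' Mf \<longleftrightarrow> M'' = chhat P (\<lambda>w. max (M'' w) (Mf w)) \<and> M'' \<noteq> Mf"

definition A_le :: "('w \<Rightarrow> 'f::finite option \<Rightarrow> 'f option \<Rightarrow> bool) \<Rightarrow> ('f option \<Rightarrow> 'w \<Rightarrow> real)
     \<Rightarrow> 'f \<Rightarrow> 'w \<Rightarrow> real" where
  "A_le PW M f w = (\<Sum>f'\<in>{f'. PW w (Some f) f' \<or> f' = Some f}. M f' w)"

definition stable :: "('w \<Rightarrow> 'f::finite option \<Rightarrow> 'f option \<Rightarrow> bool) \<Rightarrow> ('f \<Rightarrow> 'w set \<Rightarrow> 'w set \<Rightarrow> bool)
     \<Rightarrow> ('f option \<Rightarrow> 'w \<Rightarrow> real) \<Rightarrow> bool" where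
  "stable PW PF M \<longleftrightarrow>
     (\<forall>f. M (Some f) = chhat (PF f) (M (Some f)) \<and> (\<forall>w. PW w None (Some f) \<longrightarrow> M (Some f) w = 0)) \<and>
     \<not> (\<exists>f M''. (\<forall>w. 0 \<le> M'' w \<and> M'' w \<le> 1) \<and> firm_prefers (PF f) M'' (M (Some f)) \<and>
            (\<forall>w. M'' w \<le> A_le PW M f w))"

definition Bstar :: "('f \<Rightarrow> 'w::linorder set \<Rightarrow> 'w set \<Rightarrow> bool) \<Rightarrow> ('f option \<Rightarrow> 'w \<Rightarrow> real)
     \<Rightarrow> 'f option \<Rightarrow> ('w \<Rightarrow> real) list" where
  "Bstar PF M fo = (case fo of
      None \<Rightarrow> map (\<lambda>w. ind {w}) (sorted_list_of_set {w. 0 < M None w})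
    | Some f \<Rightarrow> (let us = acc_list (PF f); ts = ts_of (PF f) (M (Some f)) in
        map (\<lambda>k. ind (us ! k)) (filter (\<lambda>k. 0 < ts ! k) [0..<length us])
        @ (if sum_list ts = 1 then [] else [(\<lambda>_. 0)])))"

(* column of B^f from a column of B^{*f}; rows indexed by F + W *)
definition Bcol :: "'f option \<Rightarrow> ('w \<Rightarrow> real) \<Rightarrow> 'f + 'w \<Rightarrow> real" where
  "Bcol fo c = (\<lambda>r. case r of Inl g \<Rightarrow> (if Some g = fo then 1 else 0) | Inr w \<Rightarrow> c w)"

end

theory Submission
  imports Defs
begin


lemma ind_simp: "ind S w = (if w \<in> S then 1 else 0)" by (simp add: ind_def)

lemma strict_totalD: assumes "strict_total P"
  shows "\<not> P x x" "P x y \<Longrightarrow> P y z \<Longrightarrow> P x z" "x \<noteq> y \<Longrightarrow> P x y \<or> P y x"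
  using assms unfolding strict_total_def by blast+

lemma exists_sorted_list:
  assumes st: "strict_total P" and fin: "finite A"
  shows "\<exists>us. sorted_wrt P us \<and> set us = A"
  using fin
proof (induction A rule: finite_induct)
  case empty then show ?case by auto
next
  case (insert x A)
  then obtain l where l: "sorted_wrt P l" "set l = A" by auto
  let ?l = "filter (\<lambda>y. P y x) l @ x # filter (\<lambda>y. P x y) l"
  have "sorted_wrt P ?l"
    using l strict_totalD[OF st] by (auto simp: sorted_wrt_append sorted_wrt_filter) 
  moreover have "set ?l = insert x A" using l insert.hyps strict_totalD(3)[OF st] by auto
  ultimately show ?case by blast
qed

lemma acc_list_props:
  assumes "strict_total (P :: 'w::finite set \<Rightarrow> 'w set \<Rightarrow> bool)"
  shows "sorted_wrt P (acc_list P)" "set (acc_list P) = {S. P S {}}"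
proof -
  have "\<exists>us. sorted_wrt P us \<and> set us = {S. P S {}}"
    by (rule exists_sorted_list[OF assms]) simp
  then have "sorted_wrt P (acc_list P) \<and> set (acc_list P) = {S. P S {}}"
    unfolding acc_list_def by (rule someI_ex)
  then show "sorted_wrt P (acc_list P)" "set (acc_list P) = {S. P S {}}" by auto
qed

lemma acc_accept: assumes "strict_total (P :: 'w::finite set \<Rightarrow> 'w set \<Rightarrow> bool)"
  and "k < length (acc_list P)" shows "P (acc_list P ! k) {}"
  using acc_list_props(2)[OF assms(1)] assms(2) nth_mem by blast

lemma acc_nonempty: assumes "strict_total (P :: 'w::finite set \<Rightarrow> 'w set \<Rightarrow> bool)"
  and "k < length (acc_list P)" shows "acc_list P ! k \<noteq> {}"
  using acc_accept[OF assms] strict_totalD(1)[OF assms(1)] by auto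

lemma acc_member: assumes "strict_total (P :: 'w::finite set \<Rightarrow> 'w set \<Rightarrow> bool)"
  and "P S {}" shows "\<exists>k < length (acc_list P). acc_list P ! k = S"
  using acc_list_props(2)[OF assms(1)] assms(2) by (metis in_set_conv_nth mem_Collect_eq)

lemma acc_order: assumes st: "strict_total (P :: 'w::finite set \<Rightarrow> 'w set \<Rightarrow> bool)"
  and "j < length (acc_list P)" "a < length (acc_list P)" "P (acc_list P ! j) (acc_list P ! a)"
  shows "j < a"
proof (rule ccontr)
  assume "\<not> j < a"
  then have "a < j \<or> a = j" by auto
  then show False
  proof
    assume "a < j"
    then have "P (acc_list P ! a) (acc_list P ! j)"
      using acc_list_props(1)[OF st] assms(2) by (simp add: sorted_wrt_iff_nth_less)
    then show False using assms(4) strict_totalD[OF st] by blast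
  next
    assume "a = j" then show False using assms(4) strict_totalD[OF st] by simp
  qed
qed

lemma acc_distinct: assumes st: "strict_total (P :: 'w::finite set \<Rightarrow> 'w set \<Rightarrow> bool)"
  shows "distinct (acc_list P)"
proof -
  have "sorted_wrt P (acc_list P)" by (rule acc_list_props(1)[OF st])
  moreover have "\<And>x. \<not> P x x" using strict_totalD[OF st] by blast
  ultimately show ?thesis
    by (metis distinct_conv_nth nat_neq_iff sorted_wrt_nth_less)
qed

lemma ch_ts_length[simp]: "length (ch_ts us z s) = length us"
  by (induction us arbitrary: z s) (auto simp: Let_def)

lemma ch_ts_nth:
  "k < length us \<Longrightarrow> ch_ts us z s ! k =
     Min (insert (1 - (s + (\<Sum>j<k. ch_ts us z s ! j)))
       ((\<lambda>i. z i - (\<Sum>j<k. ch_ts us z s ! j * ind (us!j) i)) ` (us!k)))"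
proof (induction us arbitrary: z s k)
  case Nil then show ?case by simp
next
  case (Cons u us)
  show ?case
  proof (cases k)
    case 0 then show ?thesis by (simp add: Let_def)
  next
    case (Suc k')
    define t where "t = Min (insert (1 - s) (z ` u))"
    have eq: "ch_ts (u # us) z s = t # ch_ts us (\<lambda>i. z i - t * ind u i) (s + t)"
      by (simp add: t_def Let_def)
    from Cons.prems Suc have k': "k' < length us" by simp
    show ?thesis unfolding eq Suc
      using Cons.IH[OF k', of "(\<lambda>i. z i - t * ind u i)" "s + t"]
      by (simp del: sum.lessThan_Suc add: sum.lessThan_Suc_shift algebra_simps)
  qed
qed

definition SS where "SS P x k = (\<Sum>j<k. ts_of P x ! j)"
definition ZZ where "ZZ P x k i = x i - (\<Sum>j<k. ts_of P x ! j * ind (acc_list P ! j) i)"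

lemma ts_len[simp]: "length (ts_of P x) = length (acc_list P)"
  by (simp add: ts_of_def)

lemma ts_nth: "k < length (acc_list P) \<Longrightarrow>
   ts_of P x ! k = Min (insert (1 - SS P x k) (ZZ P x k ` (acc_list P ! k)))"
  unfolding SS_def ZZ_def ts_of_def
  by (subst ch_ts_nth) (auto simp: ts_of_def)

lemma SS_Suc: "SS P x (Suc k) = SS P x k + ts_of P x ! k" by (simp add: SS_def)
lemma ZZ_Suc: "ZZ P x (Suc k) i = ZZ P x k i - ts_of P x ! k * ind (acc_list P ! k) i"
  by (simp add: ZZ_def algebra_simps)
lemma ZZ_0: "ZZ P x 0 i = x i" by (simp add: ZZ_def)
lemma SS_0: "SS P x 0 = 0" by (simp add: SS_def)

lemma ts_le:
  assumes k: "k < length (acc_list (P :: 'w::finite set \<Rightarrow> 'w set \<Rightarrow> bool))"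
  shows "ts_of P x ! k \<le> 1 - SS P x k" "\<And>i. i \<in> acc_list P ! k \<Longrightarrow> ts_of P x ! k \<le> ZZ P x k i"
  unfolding ts_nth[OF k] by (rule Min_le; auto)+

lemma proc_nonneg:
  assumes x: "\<forall>i. 0 \<le> x i" and k: "k \<le> length (acc_list (P :: 'w::finite set \<Rightarrow> 'w set \<Rightarrow> bool))"
  shows "SS P x k \<le> 1 \<and> (\<forall>i. 0 \<le> ZZ P x k i)"
  using k
proof (induction k)
  case 0 then show ?case using x by (simp add: SS_def ZZ_def)
next
  case (Suc k)
  have kL: "k < length (acc_list P)" using Suc by simp
  from Suc.IH kL have ih: "SS P x k \<le> 1" "\<forall>i. 0 \<le> ZZ P x k i" by auto
  show ?case using ts_le[OF kL, where x=x] ih by (auto simp: SS_Suc ZZ_Suc ind_def)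
qed

lemma ts_nonneg:
  assumes x: "\<forall>i. 0 \<le> x i" and k: "k < length (acc_list (P :: 'w::finite set \<Rightarrow> 'w set \<Rightarrow> bool))"
  shows "0 \<le> ts_of P x ! k"
proof -
  have "SS P x k \<le> 1 \<and> (\<forall>i. 0 \<le> ZZ P x k i)" using proc_nonneg[OF x] k by simp
  then show ?thesis unfolding ts_nth[OF k] by (subst Min_ge_iff) auto
qed


context fixes P :: "'w::finite set \<Rightarrow> 'w set \<Rightarrow> bool" and x :: "'w \<Rightarrow> real"
  assumes st: "strict_total P" and xnn: "\<forall>i. 0 \<le> x i"
begin

lemma tnn: "k < length (acc_list P) \<Longrightarrow> 0 \<le> ts_of P x ! k"
  using ts_nonneg[OF xnn] by blast

lemma SS_mono: "k \<le> k' \<Longrightarrow> k' \<le> length (acc_list P) \<Longrightarrow> SS P x k \<le> SS P x k'"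
  unfolding SS_def by (rule sum_mono2) (auto intro: tnn)

lemma ZZ_mono: "k \<le> k' \<Longrightarrow> k' \<le> length (acc_list P) \<Longrightarrow> ZZ P x k' i \<le> ZZ P x k i"
proof -
  assume a: "k \<le> k'" "k' \<le> length (acc_list P)"
  have "(\<Sum>j<k. ts_of P x ! j * ind (acc_list P ! j) i) \<le> (\<Sum>j<k'. ts_of P x ! j * ind (acc_list P ! j) i)"
    by (rule sum_mono2) (use a in \<open>auto intro!: mult_nonneg_nonneg tnn simp: ind_def\<close>)
  then show ?thesis unfolding ZZ_def by simp
qed

lemma SS_le1: "k \<le> length (acc_list P) \<Longrightarrow> SS P x k \<le> 1"
  using proc_nonneg[OF xnn] by blast

lemma ZZ_nn: "k \<le> length (acc_list P) \<Longrightarrow> 0 \<le> ZZ P x k i"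
  using proc_nonneg[OF xnn] by blast

lemma sum_ts: "sum_list (ts_of P x) = SS P x (length (acc_list P))"
  unfolding SS_def by (simp add: sum_list_sum_nth atLeast0LessThan)

lemma chhat_ZZ: "chhat P x w = x w - ZZ P x (length (acc_list P)) w"
  unfolding chhat_def ZZ_def by simp

lemma chhat_le: "chhat P x w \<le> x w"
  using chhat_ZZ ZZ_nn by force

lemma chhat_nn: "0 \<le> chhat P x w"
  unfolding chhat_def by (auto intro!: sum_nonneg mult_nonneg_nonneg tnn simp: ind_def)

lemma chhat_le1: "chhat P x w \<le> 1"
proof -
  have "chhat P x w \<le> (\<Sum>k<length (acc_list P). ts_of P x ! k)"
    unfolding chhat_def by (rule sum_mono) (auto simp: ind_def intro: tnn)
  also have "\<dots> \<le> 1" using SS_le1[of "length (acc_list P)"] by (simp add: SS_def)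
  finally show ?thesis .
qed

lemma KEY:
  assumes k: "k < length (acc_list P)" and s: "SS P x (Suc k) < 1"
  shows "\<exists>i\<in>acc_list P ! k. ZZ P x (Suc k) i = 0"
proof -
  let ?E = "insert (1 - SS P x k) (ZZ P x k ` (acc_list P ! k))"
  have "Min ?E \<in> ?E" by (rule Min_in) auto
  then have "ts_of P x ! k \<in> ?E" using ts_nth[OF k] by simp
  then show ?thesis
  proof
    assume "ts_of P x ! k = 1 - SS P x k"
    then show ?thesis using s by (simp add: SS_Suc)
  next
    assume "ts_of P x ! k \<in> ZZ P x k ` (acc_list P ! k)"
    then obtain i where "i \<in> acc_list P ! k" "ts_of P x ! k = ZZ P x k i" by auto
    then show ?thesis by (auto simp: ZZ_Suc ind_def)
  qed
qed

lemma pos_ZZ: "k < length (acc_list P) \<Longrightarrow> 0 < ts_of P x ! k \<Longrightarrow> i \<in> acc_list P ! k \<Longrightarrow> 0 < ZZ P x k i"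
  using ts_le(2)[of k P i x] by simp

lemma pos_x: "k < length (acc_list P) \<Longrightarrow> 0 < ts_of P x ! k \<Longrightarrow> i \<in> acc_list P ! k \<Longrightarrow> 0 < x i"
proof -
  assume a: "k < length (acc_list P)" "0 < ts_of P x ! k" "i \<in> acc_list P ! k"
  have "0 < ZZ P x k i" using pos_ZZ a by blast
  moreover have "ZZ P x k i \<le> ZZ P x 0 i" using ZZ_mono[of 0 k i] a by simp
  ultimately show ?thesis by (simp add: ZZ_0)
qed

lemma SS_lt1: "c < length (acc_list P) \<Longrightarrow> 0 < ts_of P x ! c \<Longrightarrow> k \<le> c \<Longrightarrow> SS P x k < 1"
proof -
  assume a: "c < length (acc_list P)" "0 < ts_of P x ! c" "k \<le> c"
  have "SS P x k \<le> SS P x c" using SS_mono a by simp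
  moreover have "SS P x (Suc c) \<le> 1" using SS_le1 a by simp
  ultimately show ?thesis using a by (simp add: SS_Suc)
qed

lemma NOSUB:
  assumes j: "j < length (acc_list P)"
    and cov: "\<forall>i\<in>acc_list P ! j. \<exists>c. j < c \<and> c < length (acc_list P) \<and> 0 < ts_of P x ! c \<and> i \<in> acc_list P ! c"
  shows False
proof -
  obtain i0 where "i0 \<in> acc_list P ! j" using acc_nonempty[OF st j] by auto
  then obtain c0 where c0: "j < c0" "c0 < length (acc_list P)" "0 < ts_of P x ! c0" using cov by blast
  have s: "SS P x (Suc j) < 1" using SS_lt1[OF c0(2,3)] c0(1) by simp
  obtain i where i: "i \<in> acc_list P ! j" "ZZ P x (Suc j) i = 0" using KEY[OF j s] by blast
  then obtain c where c: "j < c" "c < length (acc_list P)" "0 < ts_of P x ! c" "i \<in> acc_list P ! c" using cov by blast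
  have "0 < ZZ P x c i" using pos_ZZ c by simp
  moreover have "ZZ P x c i \<le> ZZ P x (Suc j) i" using ZZ_mono c by simp
  ultimately show False using i by simp
qed

lemma CH_gen:
  assumes a: "a < length (acc_list P)" and ta: "0 < ts_of P x ! a"
    and sub: "acc_list P ! a \<subseteq> S"
    and cov: "\<forall>i\<in>S. \<exists>c. a \<le> c \<and> c < length (acc_list P) \<and> 0 < ts_of P x ! c \<and> i \<in> acc_list P ! c"
  shows "Ch P S = acc_list P ! a"
proof -
  let ?u = "acc_list P ! a"
  have prp: "\<forall>T'. T' \<subseteq> S \<and> T' \<noteq> ?u \<longrightarrow> P ?u T'"
  proof (intro allI impI)
    fix T' assume T': "T' \<subseteq> S \<and> T' \<noteq> ?u"
    show "P ?u T'"
    proof (rule ccontr)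
      assume n: "\<not> P ?u T'"
      then have pT: "P T' ?u" using strict_totalD(3)[OF st, of T' ?u] T' by auto
      have pu: "P ?u {}" by (rule acc_accept[OF st a])
      have "P T' {}" using strict_totalD(2)[OF st pT pu] .
      then obtain j where j: "j < length (acc_list P)" "acc_list P ! j = T'" using acc_member[OF st] by blast
      have ja: "j < a" using acc_order[OF st j(1) a] pT j by simp
      show False
      proof (rule NOSUB[OF j(1)], intro ballI)
        fix i assume "i \<in> acc_list P ! j"
        then have "i \<in> S" using j T' by auto
        then obtain c where "a \<le> c \<and> c < length (acc_list P) \<and> 0 < ts_of P x ! c \<and> i \<in> acc_list P ! c"
          using cov by blast
        then show "\<exists>c. j < c \<and> c < length (acc_list P) \<and> 0 < ts_of P x ! c \<and> i \<in> acc_list P ! c"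
          using ja by (intro exI[of _ c]) auto
      qed
    qed
  qed
  show ?thesis unfolding Ch_def
  proof (rule the_equality)
    show "?u \<subseteq> S \<and> (\<forall>T'. T' \<subseteq> S \<and> T' \<noteq> ?u \<longrightarrow> P ?u T')" using sub prp by blast
  next
    fix T assume T: "T \<subseteq> S \<and> (\<forall>T'. T' \<subseteq> S \<and> T' \<noteq> T \<longrightarrow> P T T')"
    show "T = ?u"
    proof (rule ccontr)
      assume ne: "T \<noteq> ?u"
      then have "P T ?u" using T sub by blast
      moreover have "P ?u T" using prp T ne by blast
      ultimately show False using strict_totalD[OF st] by blast
    qed
  qed
qed

end


lemma IRC:
  fixes P :: "'w::finite set \<Rightarrow> 'w set \<Rightarrow> bool"
  assumes st: "strict_total P" and xnn: "\<forall>i. 0 \<le> x i"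
    and lo: "\<forall>w. chhat P x w \<le> y w" and hi: "\<forall>w. y w \<le> x w"
  shows "ts_of P y = ts_of P x"
proof (rule nth_equalityI)
  show "length (ts_of P y) = length (ts_of P x)" by simp
next
  let ?L = "length (acc_list P)"
  have "\<forall>k < ?L. ts_of P y ! k = ts_of P x ! k"
  proof (intro allI impI)
    fix k show "k < ?L \<Longrightarrow> ts_of P y ! k = ts_of P x ! k"
    proof (induction k rule: less_induct)
      case (less k)
      let ?u = "acc_list P ! k"
      let ?tx = "ts_of P x ! k"
      have eqS: "SS P y k = SS P x k" unfolding SS_def using less by (intro sum.cong) auto
      have eqsum: "\<And>i. (\<Sum>j<k. ts_of P y ! j * ind (acc_list P ! j) i) = (\<Sum>j<k. ts_of P x ! j * ind (acc_list P ! j) i)"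
        using less by (intro sum.cong) auto
      have Zy: "\<And>i. ZZ P y k i = y i - (\<Sum>j<k. ts_of P x ! j * ind (acc_list P ! j) i)"
        unfolding ZZ_def using eqsum by simp
      have Zx: "\<And>i. ZZ P x k i = x i - (\<Sum>j<k. ts_of P x ! j * ind (acc_list P ! j) i)"
        unfolding ZZ_def by simp
      have ZyZx: "ZZ P y k i \<le> ZZ P x k i" for i
      proof -
        have "y i \<le> x i" using hi by blast
        then show ?thesis unfolding Zy Zx by simp
      qed
      have t1: "?tx \<le> 1 - SS P y k" using ts_le(1)[OF less.prems, of x] eqS by simp
      have t2: "?tx \<le> ZZ P y k i" if i: "i \<in> ?u" for i
      proof -
        have dec: "{..<?L} = {..<k} \<union> {k..<?L}" using less.prems by auto
        have "chhat P x i = (\<Sum>j<k. ts_of P x ! j * ind (acc_list P ! j) i) + (\<Sum>j\<in>{k..<?L}. ts_of P x ! j * ind (acc_list P ! j) i)"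
          unfolding chhat_def by (subst dec, subst sum.union_disjoint) auto
        moreover have "?tx * ind ?u i \<le> (\<Sum>j\<in>{k..<?L}. ts_of P x ! j * ind (acc_list P ! j) i)"
          by (rule member_le_sum[of k, where f = "\<lambda>j. ts_of P x ! j * ind (acc_list P ! j) i"])
            (use less.prems in \<open>auto intro!: mult_nonneg_nonneg tnn[OF st xnn] simp: ind_def\<close>)
        ultimately show ?thesis using Zy lo i by (simp add: ind_def) (smt (verit))
      qed
      let ?Ex = "insert (1 - SS P x k) (ZZ P x k ` ?u)"
      let ?Ey = "insert (1 - SS P y k) (ZZ P y k ` ?u)"
      have "Min ?Ex \<in> ?Ex" by (rule Min_in) auto
      then have "?tx \<in> ?Ex" using ts_nth[OF less.prems] by simp
      then have "\<exists>e\<in>?Ey. e \<le> ?tx"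
      proof
        assume "?tx = 1 - SS P x k" then show ?thesis using eqS by auto
      next
        assume "?tx \<in> ZZ P x k ` ?u"
        then obtain i where "i \<in> ?u" "?tx = ZZ P x k i" by auto
        then show ?thesis using ZyZx[of i] by auto
      qed
      then obtain e where e: "e \<in> ?Ey" "e \<le> ?tx" by blast
      have "Min ?Ey \<le> e" by (rule Min_le) (use e in auto)
      then have "Min ?Ey \<le> ?tx" using e(2) by (rule order_trans)
      moreover have "?tx \<le> Min ?Ey" using t1 t2 by (subst Min_ge_iff) auto
      ultimately show ?case using ts_nth[OF less.prems, of y] by simp
    qed
  qed
  then show "\<And>i. i < length (ts_of P y) \<Longrightarrow> ts_of P y ! i = ts_of P x ! i" by simp
qed

lemma IRC_chhat:
  fixes P :: "'w::finite set \<Rightarrow> 'w set \<Rightarrow> bool"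
  assumes st: "strict_total P" and xnn: "\<forall>i. 0 \<le> x i"
    and lo: "\<forall>w. chhat P x w \<le> y w" and hi: "\<forall>w. y w \<le> x w"
  shows "chhat P y = chhat P x"
  unfolding chhat_def using IRC[OF assms] by simp

lemma chhat_ind_gen:
  fixes P :: "'w::finite set \<Rightarrow> 'w set \<Rightarrow> bool"
  assumes st: "strict_total P" and k0: "k0 \<le> length (acc_list P)"
    and sub: "k0 < length (acc_list P) \<Longrightarrow> acc_list P ! k0 \<subseteq> T"
    and nsub: "\<forall>j<k0. \<not> acc_list P ! j \<subseteq> T"
  shows "\<forall>k<length (acc_list P). ts_of P (ind T) ! k = (if k = k0 then 1 else 0)"
proof (intro allI impI)
  fix k show "k < length (acc_list P) \<Longrightarrow> ts_of P (ind T) ! k = (if k = k0 then 1 else 0)"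
  proof (induction k rule: less_induct)
    case (less k)
    let ?u = "acc_list P ! k"
    have "SS P (ind T) k = (\<Sum>j<k. if j = k0 then 1 else 0)"
      unfolding SS_def using less.IH less.prems by (intro sum.cong) auto
    also have "\<dots> = (if k0 < k then 1 else 0)" by (subst sum.delta) auto
    finally have S: "SS P (ind T) k = (if k0 < k then 1 else 0)" .
    have Z: "ZZ P (ind T) k i = ind T i - (if k0 < k then ind (acc_list P ! k0) i else 0)" for i
    proof -
      have "(\<Sum>j<k. ts_of P (ind T) ! j * ind (acc_list P ! j) i) = (\<Sum>j<k. if j = k0 then ind (acc_list P ! j) i else 0)"
        using less.IH less.prems by (intro sum.cong) auto
      also have "\<dots> = (if k0 < k then ind (acc_list P ! k0) i else 0)" by (subst sum.delta) auto
      finally show ?thesis unfolding ZZ_def by simp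
    qed
    have ne: "?u \<noteq> {}" using acc_nonempty[OF st less.prems] .
    let ?E = "insert (1 - SS P (ind T) k) (ZZ P (ind T) k ` ?u)"
    have tk: "ts_of P (ind T) ! k = Min ?E" using ts_nth[OF less.prems] by simp
    show ?case
    proof (cases "k < k0")
      case True
      then obtain i where i: "i \<in> ?u" "i \<notin> T" using nsub by blast
      have "0 \<in> ?E" using i True Z[of i] by (auto simp: ind_def image_iff)
      moreover have "\<forall>e\<in>?E. 0 \<le> e" using True S Z by (auto simp: ind_def)
      ultimately have "Min ?E = 0"
        by (intro Min_eqI) auto
      then show ?thesis using tk True by simp
    next
      case False
      show ?thesis
      proof (cases "k = k0")
        case True
        then have "?u \<subseteq> T" using sub less.prems by simp
        then have Zu: "\<forall>i\<in>?u. ZZ P (ind T) k i = 1" using True Z by (auto simp: ind_def)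
        then have "ZZ P (ind T) k ` ?u = {1}" using ne by auto
        then have "?E = {1}" using True S by simp
        then have "Min ?E = 1" by (simp only: Min_singleton)
        then show ?thesis using tk True by simp
      next
        case F2: False
        then have kk: "k0 < k" using False by simp
        then have sub0: "acc_list P ! k0 \<subseteq> T" using sub less.prems by simp
        have "0 \<in> ?E" using kk S by simp
        moreover have "\<forall>e\<in>?E. 0 \<le> e" using kk S Z sub0 by (auto simp: ind_def)
        ultimately have "Min ?E = 0"
          by (intro Min_eqI) auto
        then show ?thesis using tk F2 by simp
      qed
    qed
  qed
qed

lemma chhat_ind_first:
  fixes P :: "'w::finite set \<Rightarrow> 'w set \<Rightarrow> bool"
  assumes st: "strict_total P" and k0: "k0 < length (acc_list P)"
    and sub: "acc_list P ! k0 \<subseteq> T"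
    and nsub: "\<forall>j<k0. \<not> acc_list P ! j \<subseteq> T"
  shows "chhat P (ind T) = ind (acc_list P ! k0)"
proof -
  have "\<forall>k<length (acc_list P). ts_of P (ind T) ! k = (if k = k0 then 1 else 0)"
    using chhat_ind_gen[OF st] assms by simp
  then have "\<And>w. (\<Sum>k<length (acc_list P). ts_of P (ind T) ! k * ind (acc_list P ! k) w)
     = (\<Sum>k<length (acc_list P). if k = k0 then ind (acc_list P ! k) w else 0)"
    by (intro sum.cong) auto
  then show ?thesis unfolding chhat_def using k0 by (simp add: sum.delta fun_eq_iff)
qed

lemma chhat_ind_none:
  fixes P :: "'w::finite set \<Rightarrow> 'w set \<Rightarrow> bool"
  assumes st: "strict_total P"
    and nsub: "\<forall>j<length (acc_list P). \<not> acc_list P ! j \<subseteq> T"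
  shows "chhat P (ind T) = (\<lambda>_. 0)"
proof -
  have "\<forall>k<length (acc_list P). ts_of P (ind T) ! k = (if k = length (acc_list P) then 1 else 0)"
    using chhat_ind_gen[OF st order.refl _ nsub] by simp
  then show ?thesis unfolding chhat_def by (auto simp: fun_eq_iff intro!: sum.neutral)
qed

context fixes P :: "'w::finite set \<Rightarrow> 'w set \<Rightarrow> bool" and x :: "'w \<Rightarrow> real"
  assumes st: "strict_total P" and xnn: "\<forall>i. 0 \<le> x i"
begin

lemma Ch_empty: "Ch P {} = {}"
  unfolding Ch_def by (rule the_equality) auto

lemma DT1:
  assumes a: "a < length (acc_list P)" and ta: "0 < ts_of P x ! a"
  shows "indI (acc_list P ! a) \<in> demand_type P"
proof -
  let ?u = "acc_list P ! a"
  have ch: "Ch P ?u = ?u" by (rule CH_gen[OF st xnn a ta]) (use a ta in auto)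
  obtain w where "w \<in> ?u" using acc_nonempty[OF st a] by auto
  then have nz: "indI ?u \<noteq> (\<lambda>_. 0)" by (auto simp: indI_def fun_eq_iff)
  have "{} \<subset> ?u" using acc_nonempty[OF st a] by auto
  moreover have "indI ?u = (\<lambda>w. indI (Ch P ?u) w - indI (Ch P {}) w)"
    using ch Ch_empty by (simp add: indI_def fun_eq_iff)
  ultimately show ?thesis unfolding demand_type_def using nz by (auto simp: indI_def)
qed

lemma DT2:
  assumes ab: "a < b" and b: "b < length (acc_list P)" and ta: "0 < ts_of P x ! a" and tb: "0 < ts_of P x ! b"
  shows "(\<lambda>w. indI (acc_list P ! a) w - indI (acc_list P ! b) w) \<in> demand_type P"
proof -
  let ?ua = "acc_list P ! a" and ?ub = "acc_list P ! b"
  have a: "a < length (acc_list P)" using ab b by simp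
  have cha: "Ch P (?ua \<union> ?ub) = ?ua"
    by (rule CH_gen[OF st xnn a ta]) (use a ta ab b tb in \<open>auto intro: less_imp_le\<close>)
  have chb: "Ch P ?ub = ?ub" by (rule CH_gen[OF st xnn b tb]) (use b tb in auto)
  have nsub: "\<not> ?ua \<subseteq> ?ub"
  proof
    assume s: "?ua \<subseteq> ?ub"
    show False by (rule NOSUB[OF st xnn a]) (use s ab b tb in blast)
  qed
  have ne: "?ua \<noteq> ?ub" using acc_distinct[OF st] a b ab by (simp add: nth_eq_iff_index_eq)
  then obtain w where "w \<in> ?ua \<and> w \<notin> ?ub \<or> w \<in> ?ub \<and> w \<notin> ?ua" by blast
  then have nz: "(\<lambda>w. indI ?ua w - indI ?ub w) \<noteq> (\<lambda>_. 0)" by (auto simp: indI_def fun_eq_iff)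
  have "?ub \<subset> ?ua \<union> ?ub" using nsub by auto
  moreover have "(\<lambda>w. indI ?ua w - indI ?ub w) = (\<lambda>w. indI (Ch P (?ua \<union> ?ub)) w - indI (Ch P ?ub) w)"
    using cha chb by simp
  ultimately show ?thesis unfolding demand_type_def using nz by (auto simp: indI_def)
qed

end


definition msub :: "('c \<Rightarrow> 'r \<Rightarrow> 'a) \<Rightarrow> 'r list \<Rightarrow> 'c list \<Rightarrow> 'a mat" where
  "msub A rs cs = mat (length rs) (length cs) (\<lambda>(i,j). A (cs!j) (rs!i))"

definition dl :: "nat \<Rightarrow> 'a list \<Rightarrow> 'a list" where
  "dl i xs = take i xs @ drop (Suc i) xs"

lemma dl_length[simp]: "i < length xs \<Longrightarrow> length (dl i xs) = length xs - 1"
  by (simp add: dl_def)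

lemma dl_nth: "i < length xs \<Longrightarrow> i' < length xs - 1 \<Longrightarrow> dl i xs ! i' = xs ! (if i' < i then i' else Suc i')"
  by (auto simp: dl_def nth_append min_def)

lemma dl_last[simp]: "dl (length xs) (xs @ [a]) = xs"
  by (simp add: dl_def)

lemma dl_set: "set (dl i xs) \<subseteq> set xs"
  by (auto simp: dl_def dest: in_set_takeD in_set_dropD)

lemma dl_distinct: "distinct xs \<Longrightarrow> distinct (dl i xs)"
  unfolding dl_def by (simp add: set_take_disj_set_drop_if_distinct)

lemma msub_carrier[simp]: "msub A rs cs \<in> carrier_mat (length rs) (length cs)"
  by (simp add: msub_def)

lemma msub_index[simp]: "i < length rs \<Longrightarrow> j < length cs \<Longrightarrow> msub A rs cs $$ (i,j) = A (cs!j) (rs!i)"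
  by (simp add: msub_def)

lemma msub_dim[simp]: "dim_row (msub A rs cs) = length rs" "dim_col (msub A rs cs) = length cs"
  by (simp_all add: msub_def)

lemma msub_delete:
  assumes "i < length rs" "j < length cs"
  shows "mat_delete (msub A rs cs) i j = msub A (dl i rs) (dl j cs)"
  by (rule eq_matI) (use assms in \<open>auto simp: mat_delete_def dl_nth\<close>)

lemma det_int:
  assumes A: "(A :: real mat) \<in> carrier_mat n n" and ent: "\<forall>i<n. \<forall>j<n. A $$ (i,j) \<in> \<int>"
  shows "det A \<in> \<int>"
proof -
  have "det A = (\<Sum> p \<in> {p. p permutes {0 ..< n}}. signof p * (\<Prod> i = 0 ..< n. A $$ (i, p i)))"
    by (rule det_def'[OF A])
  also have "\<dots> \<in> \<int>"
  proof (rule Ints_sum, rule Ints_mult)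
    fix p assume "p \<in> {p. p permutes {0 ..< n}}"
    then have p: "p permutes {0..<n}" by simp
    show "signof p \<in> \<int>" by (simp add: sign_def)
    show "(\<Prod> i = 0 ..< n. A $$ (i, p i)) \<in> \<int>"
      by (rule Ints_prod) (use ent permutes_in_image[OF p] in auto)
  qed
  finally show ?thesis .
qed

lemma det_col_single:
  assumes A: "(A :: 'a::comm_ring_1 mat) \<in> carrier_mat n n" and j: "j < n" and i0: "i0 < n"
    and z: "\<forall>i<n. i \<noteq> i0 \<longrightarrow> A $$ (i,j) = 0"
  shows "det A = A $$ (i0,j) * cofactor A i0 j"
proof -
  have "det A = (\<Sum>i<n. A $$ (i,j) * cofactor A i j)" by (rule laplace_expansion_column[OF A j])
  also have "\<dots> = (\<Sum>i<n. if i = i0 then A $$ (i,j) * cofactor A i j else 0)"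
    by (rule sum.cong) (use z in auto)
  also have "\<dots> = A $$ (i0,j) * cofactor A i0 j" using i0 by (simp add: sum.delta)
  finally show ?thesis .
qed

lemma det_row_single:
  assumes A: "(A :: 'a::comm_ring_1 mat) \<in> carrier_mat n n" and i: "i < n" and j0: "j0 < n"
    and z: "\<forall>j<n. j \<noteq> j0 \<longrightarrow> A $$ (i,j) = 0"
  shows "det A = A $$ (i,j0) * cofactor A i j0"
proof -
  have "det A = (\<Sum>j<n. A $$ (i,j) * cofactor A i j)" by (rule laplace_expansion_row[OF A i])
  also have "\<dots> = (\<Sum>j<n. if j = j0 then A $$ (i,j) * cofactor A i j else 0)"
    by (rule sum.cong) (use z in auto)
  also have "\<dots> = A $$ (i,j0) * cofactor A i j0" using j0 by (simp add: sum.delta)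
  finally show ?thesis .
qed

lemma det_col_zero:
  assumes A: "(A :: 'a::comm_ring_1 mat) \<in> carrier_mat n n" and j: "j < n"
    and z: "\<forall>i<n. A $$ (i,j) = 0"
  shows "det A = 0"
  using laplace_expansion_column[OF A j] z by simp

lemma det_row_zero:
  assumes A: "(A :: 'a::comm_ring_1 mat) \<in> carrier_mat n n" and i: "i < n"
    and z: "\<forall>j<n. A $$ (i,j) = 0"
  shows "det A = 0"
  using laplace_expansion_row[OF A i] z by simp

lemma det_col_neg:
  assumes A: "(A :: 'a::comm_ring_1 mat) \<in> carrier_mat n n" and B: "B \<in> carrier_mat n n" and j: "j < n"
    and same: "\<forall>i<n. \<forall>j'<n. j' \<noteq> j \<longrightarrow> B $$ (i,j') = A $$ (i,j')"
    and neg: "\<forall>i<n. B $$ (i,j) = - A $$ (i,j)"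
  shows "det B = - det A"
proof -
  have cof: "cofactor B i j = cofactor A i j" if i: "i < n" for i
  proof -
    have "mat_delete B i j = mat_delete A i j"
      by (rule eq_matI) (use A B same j i in \<open>auto simp: mat_delete_def\<close>)
    then show ?thesis by (simp add: cofactor_def)
  qed
  have "det B = (\<Sum>i<n. B $$ (i,j) * cofactor B i j)" by (rule laplace_expansion_column[OF B j])
  also have "\<dots> = (\<Sum>i<n. - (A $$ (i,j) * cofactor A i j))"
    by (rule sum.cong) (use cof neg in auto)
  also have "\<dots> = - det A" using laplace_expansion_column[OF A j] by (simp add: sum_negf)
  finally show ?thesis .
qed

lemma msub_identical_cols:
  assumes "j1 < length cs" "j2 < length cs" "j1 \<noteq> j2" "cs ! j1 = cs ! j2" "length rs = length cs"
  shows "det (msub A rs cs) = 0"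
proof -
  have "msub A rs cs \<in> carrier_mat (length cs) (length cs)" by (metis msub_carrier assms(5))
  then show ?thesis
    by (rule det_identical_columns[of _ _ j1 j2]) (use assms in \<open>auto intro!: eq_vecI\<close>)
qed

lemma msub_identical_rows:
  assumes "i1 < length rs" "i2 < length rs" "i1 \<noteq> i2" "rs ! i1 = rs ! i2" "length rs = length cs"
  shows "det (msub A rs cs) = 0"
proof -
  have "msub A rs cs \<in> carrier_mat (length rs) (length rs)" by (metis msub_carrier assms(5))
  then show ?thesis
    by (rule det_identical_rows[of _ _ i1 i2]) (use assms in \<open>auto intro!: eq_vecI\<close>)
qed


lemma sum_set_nth:
  assumes "distinct cs"
  shows "(\<Sum>c\<in>set cs. f c) = (\<Sum>j<length cs. f (cs ! j))"
proof -
  have "set cs = (!) cs ` {..<length cs}" by (auto simp: in_set_conv_nth)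
  moreover have "inj_on ((!) cs) {..<length cs}" using assms by (simp add: inj_on_nth)
  ultimately show ?thesis by (simp add: sum.reindex)
qed

lemma DEP:
  fixes A :: "'c \<Rightarrow> 'r \<Rightarrow> real"
  assumes "distinct cs"
  shows "(\<exists>rs. distinct rs \<and> length rs = length cs \<and> det (msub A rs cs) \<noteq> 0) \<or>
         (\<exists>y. (\<exists>c\<in>set cs. y c \<noteq> 0) \<and> (\<forall>c. c \<notin> set cs \<longrightarrow> y c = 0) \<and> (\<forall>r. (\<Sum>c\<in>set cs. y c * A c r) = 0))"
  using assms
proof (induction cs rule: rev_induct)
  case Nil
  have "det (msub A [] []) = 1" by (rule det_dim_zero) (metis msub_carrier list.size(3))
  then show ?case by (intro disjI1 exI[of _ "[]"]) simp
next
  case (snoc c cs0)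
  have d0: "distinct cs0" and cn: "c \<notin> set cs0" using snoc.prems by auto
  from snoc.IH[OF d0] show ?case
  proof
    assume "\<exists>y. (\<exists>c\<in>set cs0. y c \<noteq> 0) \<and> (\<forall>c. c \<notin> set cs0 \<longrightarrow> y c = 0) \<and> (\<forall>r. (\<Sum>c\<in>set cs0. y c * A c r) = 0)"
    then obtain y where y: "\<exists>c\<in>set cs0. y c \<noteq> 0" "\<forall>c. c \<notin> set cs0 \<longrightarrow> y c = 0" "\<forall>r. (\<Sum>c\<in>set cs0. y c * A c r) = 0"
      by blast
    have "\<forall>r. (\<Sum>c\<in>set (cs0 @ [c]). y c * A c r) = 0" using y cn by simp
    then show ?thesis using y by (intro disjI2 exI[of _ y]) auto
  next
    assume "\<exists>rs. distinct rs \<and> length rs = length cs0 \<and> det (msub A rs cs0) \<noteq> 0"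
    then obtain rs0 where rs0: "distinct rs0" "length rs0 = length cs0" "det (msub A rs0 cs0) \<noteq> 0" by blast
    let ?k = "length cs0"
    let ?cs = "cs0 @ [c]"
    show ?thesis
    proof (cases "\<exists>r. det (msub A (rs0 @ [r]) ?cs) \<noteq> 0")
      case True
      then obtain r where r: "det (msub A (rs0 @ [r]) ?cs) \<noteq> 0" by blast
      have "r \<notin> set rs0"
      proof
        assume "r \<in> set rs0"
        then obtain p where p: "p < length rs0" "rs0 ! p = r" by (auto simp: in_set_conv_nth)
        have "det (msub A (rs0 @ [r]) ?cs) = 0"
          by (rule msub_identical_rows[of p _ "length rs0"]) (use p rs0 in \<open>auto simp: nth_append\<close>)
        then show False using r by simp
      qed
      then show ?thesis using rs0 r by (intro disjI1 exI[of _ "rs0 @ [r]"]) auto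
    next
      case False
      define w where "w j = (-1)^(?k + j) * det (msub A rs0 (dl j ?cs))" for j
      define y where "y c' = (\<Sum>j\<in>{j. j < Suc ?k \<and> ?cs ! j = c'}. w j)" for c'
      have dcs: "distinct ?cs" using snoc.prems .
      have yj: "y (?cs ! j) = w j" if j: "j < Suc ?k" for j
      proof -
        have "{j'. j' < Suc ?k \<and> ?cs ! j' = ?cs ! j} = {j}"
          using dcs j by (auto simp: nth_eq_iff_index_eq)
        then show ?thesis by (simp add: y_def)
      qed
      have rowsum: "(\<Sum>c'\<in>set ?cs. y c' * A c' r) = 0" for r
      proof -
        let ?M = "msub A (rs0 @ [r]) ?cs"
        have M: "?M \<in> carrier_mat (Suc ?k) (Suc ?k)" using rs0 by (metis length_append_singleton msub_carrier)
        from False have "\<forall>r. det (msub A (rs0 @ [r]) ?cs) = 0" by simp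
        then have "0 = det ?M" by simp
        also have "\<dots> = (\<Sum>j<Suc ?k. ?M $$ (?k, j) * cofactor ?M ?k j)"
          by (rule laplace_expansion_row[OF M]) simp
        also have "\<dots> = (\<Sum>j<Suc ?k. y (?cs ! j) * A (?cs ! j) r)"
        proof (rule sum.cong[OF refl])
          fix j assume j: "j \<in> {..<Suc ?k}"
          have "cofactor ?M ?k j = w j"
            unfolding cofactor_def w_def using rs0 j
            by (subst msub_delete) (auto simp: rs0(2)[symmetric])
          then show "?M $$ (?k, j) * cofactor ?M ?k j = y (?cs ! j) * A (?cs ! j) r"
            using j yj rs0 by (simp add: nth_append)
        qed
        also have "\<dots> = (\<Sum>c'\<in>set ?cs. y c' * A c' r)"
          using sum_set_nth[OF dcs, of "\<lambda>c'. y c' * A c' r"] by simp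
        finally show ?thesis by simp
      qed
      have yc: "y c = det (msub A rs0 cs0)"
      proof -
        have "y c = y (?cs ! ?k)" by simp
        also have "\<dots> = w ?k" using yj[of ?k] by simp
        also have "\<dots> = det (msub A rs0 cs0)" by (simp add: w_def)
        finally show ?thesis .
      qed
      have yout: "y c' = 0" if "c' \<notin> set ?cs" for c'
      proof -
        have "{j. j < Suc ?k \<and> ?cs ! j = c'} = {}" using that
          by (auto simp del: set_append)
        then show ?thesis unfolding y_def by (metis sum.empty)
      qed
      show ?thesis using rowsum yc yout rs0(3) by (intro disjI2 exI[of _ y]) auto
    qed
  qed
qed

lemma INTEG:
  fixes A :: "'c \<Rightarrow> 'r \<Rightarrow> real" and C :: "'c set"
  assumes finC: "finite C"
   and Aint: "\<forall>c r. A c r \<in> \<int>" and bint: "\<forall>r. b r \<in> \<int>"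
   and TU: "\<forall>rs cs. distinct rs \<and> distinct cs \<and> set cs \<subseteq> C \<and> length rs = length cs \<longrightarrow> det (msub A rs cs) \<in> {-1,0,1}"
  shows "(\<forall>c. 0 \<le> x c) \<Longrightarrow> (\<forall>c. c \<notin> C \<longrightarrow> x c = 0) \<Longrightarrow> (\<forall>r. (\<Sum>c\<in>C. x c * A c r) = b r) \<Longrightarrow>
     \<exists>z. (\<forall>c. z c \<in> \<int> \<and> 0 \<le> z c) \<and> (\<forall>c. c \<notin> C \<longrightarrow> z c = 0) \<and> (\<forall>r. (\<Sum>c\<in>C. z c * A c r) = b r)"
proof (induction "card {c\<in>C. x c \<noteq> 0}" arbitrary: x rule: less_induct)
  case less
  let ?S = "{c\<in>C. x c \<noteq> 0}"
  have finS: "finite ?S" using finC by simp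
  obtain cs where cs: "set cs = ?S" "distinct cs" using finite_distinct_list[OF finS] by blast
  have sumS: "(\<Sum>c\<in>C. f c) = (\<Sum>c\<in>set cs. f c)" if "\<forall>c. c \<notin> set cs \<longrightarrow> f c = 0" for f :: "'c \<Rightarrow> real"
    by (rule sum.mono_neutral_right) (use finC cs that in auto)
  from DEP[OF cs(2), of A] show ?case
  proof
    assume "\<exists>rs. distinct rs \<and> length rs = length cs \<and> det (msub A rs cs) \<noteq> 0"
    then obtain rs where rs: "distinct rs" "length rs = length cs" "det (msub A rs cs) \<noteq> 0" by blast
    let ?k = "length cs"
    let ?M = "msub A rs cs"
    have M: "?M \<in> carrier_mat ?k ?k" by (metis msub_carrier rs(2))
    have dM: "det ?M = 1 \<or> det ?M = -1" using TU rs cs by auto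
    define xv where "xv = vec ?k (\<lambda>j. x (cs ! j))"
    have xv: "xv \<in> carrier_vec ?k" by (simp add: xv_def)
    have Mx: "?M *\<^sub>v xv = vec ?k (\<lambda>i. b (rs ! i))"
    proof (rule eq_vecI)
      fix i assume i: "i < dim_vec (vec ?k (\<lambda>i. b (rs ! i)))"
      then have i: "i < ?k" by simp
      have "(?M *\<^sub>v xv) $ i = (\<Sum>j<?k. A (cs ! j) (rs ! i) * x (cs ! j))"
        using i rs(2) by (simp add: mult_mat_vec_def scalar_prod_def xv_def Matrix.row_def atLeast0LessThan)
      also have "\<dots> = (\<Sum>c\<in>set cs. x c * A c (rs ! i))"
        using sum_set_nth[OF cs(2), of "\<lambda>c. x c * A c (rs ! i)"] by (simp add: mult.commute)
      also have "\<dots> = (\<Sum>c\<in>C. x c * A c (rs ! i))"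
      proof -
        have "\<forall>c. c \<notin> set cs \<longrightarrow> x c * A c (rs ! i) = 0"
        proof (intro allI impI)
          fix c assume "c \<notin> set cs"
          then have "x c = 0" using cs(1) less.prems(2) by blast
          then show "x c * A c (rs ! i) = 0" by simp
        qed
        from sumS[OF this] show ?thesis by simp
      qed
      also have "\<dots> = b (rs ! i)" using less.prems by blast
      finally show "(?M *\<^sub>v xv) $ i = vec ?k (\<lambda>i. b (rs ! i)) $ i" using i by simp
    qed (use rs(2) in simp)
    have xint: "x c \<in> \<int>" for c
    proof (cases "c \<in> set cs")
      case False
      then have "x c = 0" using cs less.prems(2) by blast
      then show ?thesis by simp
    next
      case True
      then obtain j where j: "j < ?k" "cs ! j = c" by (auto simp: in_set_conv_nth)
      have cr: "det (replace_col ?M (?M *\<^sub>v xv) j) = xv $ j * det ?M"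
        by (rule cramer_lemma_mat[OF M xv j(1)])
      have "det (replace_col ?M (?M *\<^sub>v xv) j) \<in> \<int>"
      proof (rule det_int)
        show "replace_col ?M (?M *\<^sub>v xv) j \<in> carrier_mat ?k ?k" using rs(2) by (simp add: replace_col_def)
        show "\<forall>i<?k. \<forall>j'<?k. replace_col ?M (?M *\<^sub>v xv) j $$ (i, j') \<in> \<int>"
          using Mx Aint bint rs(2) by (auto simp: replace_col_def)
      qed
      then have "x c * det ?M \<in> \<int>" using cr j xv_def by simp
      then show ?thesis using dM
        by (metis Ints_minus minus_mult_minus mult.right_neutral mult_minus1_right)
    qed
    show ?case using xint less.prems by (intro exI[of _ x]) auto
  next
    assume "\<exists>y. (\<exists>c\<in>set cs. y c \<noteq> 0) \<and> (\<forall>c. c \<notin> set cs \<longrightarrow> y c = 0) \<and> (\<forall>r. (\<Sum>c\<in>set cs. y c * A c r) = 0)"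
    then obtain y0 where y0: "\<exists>c\<in>set cs. y0 c \<noteq> 0" "\<forall>c. c \<notin> set cs \<longrightarrow> y0 c = 0" "\<forall>r. (\<Sum>c\<in>set cs. y0 c * A c r) = 0"
      by blast
    define y where "y = (if \<exists>c. y0 c < 0 then y0 else (\<lambda>c. - y0 c))"
    have y: "\<exists>c. y c < 0" "\<forall>c. c \<notin> set cs \<longrightarrow> y c = 0" "\<forall>r. (\<Sum>c\<in>set cs. y c * A c r) = 0"
    proof -
      show "\<exists>c. y c < 0"
      proof (cases "\<exists>c. y0 c < 0")
        case True then show ?thesis by (simp add: y_def)
      next
        case False
        then obtain c where "y0 c \<noteq> 0" "\<not> y0 c < 0" using y0(1) by blast
        then have "0 < y0 c" by linarith
        then show ?thesis using False by (intro exI[of _ c]) (auto simp: y_def)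
      qed
      show "\<forall>c. c \<notin> set cs \<longrightarrow> y c = 0" using y0(2) by (simp add: y_def)
      show "\<forall>r. (\<Sum>c\<in>set cs. y c * A c r) = 0" using y0(3) by (simp add: y_def sum_negf)
    qed
    let ?N = "{c\<in>set cs. y c < 0}"
    have Nne: "?N \<noteq> {}" using y(1) y(2) by force
    define lam where "lam = Min ((\<lambda>c. x c / - y c) ` ?N)"
    have "lam \<in> (\<lambda>c. x c / - y c) ` ?N" unfolding lam_def by (rule Min_in) (use Nne in auto)
    then obtain c0 where c0: "c0 \<in> ?N" "lam = x c0 / - y c0" by blast
    have lam_le: "lam \<le> x c / - y c" if "c \<in> ?N" for c
      unfolding lam_def by (rule Min_le) (use that in auto)
    have xpos: "0 < x c" if "c \<in> set cs" for c using that cs less.prems(1) by (metis (mono_tags, lifting) less_eq_real_def mem_Collect_eq)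
    have lam0: "0 \<le> lam"
    proof -
      have "0 < x c0" "0 < - y c0" using c0 xpos by auto
      then show ?thesis using c0(2) by (simp add: divide_pos_neg less_imp_le)
    qed
    define x' where "x' c = x c + lam * y c" for c
    have x'nn: "0 \<le> x' c" for c
    proof (cases "y c < 0")
      case True
      then have "c \<in> set cs" using y(2) by force
      then have "lam \<le> x c / - y c" using lam_le True by simp
      moreover have "0 < - y c" using True by simp
      ultimately have "lam * (- y c) \<le> x c" by (metis pos_le_divide_eq)
      then show ?thesis by (simp add: x'_def)
    next
      case False
      then show ?thesis using lam0 less.prems(1) by (simp add: x'_def)
    qed
    have x'out: "x' c = 0" if "c \<notin> C" for c
      using that less.prems(2) y(2) cs by (auto simp: x'_def)
    have x'sum: "(\<Sum>c\<in>C. x' c * A c r) = b r" for r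
    proof -
      have "(\<Sum>c\<in>C. x' c * A c r) = (\<Sum>c\<in>C. x c * A c r) + lam * (\<Sum>c\<in>C. y c * A c r)"
        by (simp add: x'_def algebra_simps sum.distrib sum_distrib_left)
      moreover have "(\<Sum>c\<in>C. y c * A c r) = 0" using sumS[of "\<lambda>c. y c * A c r"] y(2,3) by simp
      ultimately show ?thesis using less.prems(3) by simp
    qed
    have sub: "{c\<in>C. x' c \<noteq> 0} \<subset> ?S"
    proof
      show "{c\<in>C. x' c \<noteq> 0} \<subseteq> ?S"
      proof (rule subsetI)
        fix c assume c: "c \<in> {c\<in>C. x' c \<noteq> 0}"
        show "c \<in> ?S"
        proof (rule ccontr)
          assume n: "c \<notin> ?S"
          then have "c \<notin> set cs" using cs(1) by simp
          then have "y c = 0" using y(2) by blast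
          moreover have "x c = 0" using n c by simp
          ultimately show False using c by (simp add: x'_def)
        qed
      qed
      have "x' c0 = 0" using c0 by (simp add: x'_def)
      moreover have "c0 \<in> ?S" using c0 cs by simp
      ultimately show "{c\<in>C. x' c \<noteq> 0} \<noteq> ?S" by blast
    qed
    have cardlt: "card {c\<in>C. x' c \<noteq> 0} < card ?S" by (rule psubset_card_mono[OF finS sub])
    have "\<exists>z. (\<forall>c. z c \<in> \<int> \<and> 0 \<le> z c) \<and> (\<forall>c. c \<notin> C \<longrightarrow> z c = 0) \<and> (\<forall>r. (\<Sum>c\<in>C. z c * A c r) = b r)"
      by (rule less.hyps[OF cardlt]) (use x'nn x'out x'sum in auto)
    then show ?case .
  qed
qed


lemma Bcol_Inl_Some: "Bcol (Some f) v (Inl g) = (if g = f then 1 else 0)"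
  by (simp add: Bcol_def)
lemma Bcol_Inl_None: "Bcol None v (Inl g) = 0"
  by (simp add: Bcol_def)
lemma Bcol_Inr: "Bcol fo v (Inr w) = v w"
  by (simp add: Bcol_def)

lemma card_idx_le: "card {j. j < n \<and> Q j} \<le> n"
  using card_mono[of "{..<n}" "{j. j < n \<and> Q j}"] by auto

definition nQ :: "('f + 'w \<Rightarrow> real) list \<Rightarrow> nat" where
  "nQ cs = card {j. j < length cs \<and> (\<exists>g. (cs!j) (Inl g) \<noteq> 0)}"

lemma mu_dec:
  assumes "length cs' = length cs - 1" "1 \<le> length cs"
  shows "length cs' * length cs' + nQ cs' < length cs * length cs + nQ cs"
proof -
  have "nQ cs' \<le> length cs'" unfolding nQ_def by (rule card_idx_le)
  moreover obtain m where "length cs = Suc m" using assms(2) by (cases "length cs") auto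
  ultimately show ?thesis using assms(1) by simp
qed

lemma det_pm_delete:
  assumes M: "det (msub (\<lambda>c. c) rs cs) = a * cofactor (msub (\<lambda>c. c) rs cs) i j"
    and a: "a = 1" and i: "i < length rs" and j: "j < length cs"
    and ih: "det (msub (\<lambda>c. c) (dl i rs) (dl j cs)) \<in> {-1, 0, 1}"
  shows "det (msub (\<lambda>c. c) rs cs) \<in> {-1, 0, (1::real)}"
proof -
  have "det (msub (\<lambda>c. c) rs cs) = (-1)^(i+j) * det (msub (\<lambda>c. c) (dl i rs) (dl j cs))"
    using M a i j by (simp add: cofactor_def msub_delete)
  moreover have "(-1::real)^(i+j) = 1 \<or> (-1::real)^(i+j) = -1" by (cases "even (i+j)") auto
  ultimately show ?thesis using ih by auto
qed

lemma GEN: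
  fixes V :: "'f \<Rightarrow> ('w \<Rightarrow> real) set" and DD :: "('w \<Rightarrow> real) set"
    and G :: "('f + 'w \<Rightarrow> real) set"
  assumes A1: "\<forall>f v1 v2. v1 \<in> V f \<longrightarrow> v2 \<in> V f \<longrightarrow> (\<lambda>w. v1 w - v2 w) \<in> DD"
    and A2: "\<forall>f v. v \<in> V f \<longrightarrow> v \<in> DD"
    and A3: "\<forall>ws ds. distinct ws \<and> set ds \<subseteq> DD \<and> length ws = length ds \<longrightarrow> det (msub (\<lambda>d. d) ws ds) \<in> {-1,0,1}"
    and Gdef: "G = {Bcol (Some f) v | f v. v \<in> V f} \<union> {Bcol None d | d. d \<in> DD} \<union> {Bcol None (ind {w}) | w. True}"
  shows "distinct rs \<Longrightarrow> length rs = length cs \<Longrightarrow> set cs \<subseteq> G \<Longrightarrow> det (msub (\<lambda>c. c) rs cs) \<in> {-1,0,1}"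
proof (induction "length cs * length cs + nQ cs" arbitrary: rs cs rule: less_induct)
  case less
  let ?k = "length cs"
  let ?M = "msub (\<lambda>c. c) rs cs"
  let ?Q = "\<lambda>c. \<exists>g. c (Inl g) \<noteq> 0"
  have M: "?M \<in> carrier_mat ?k ?k" by (metis msub_carrier less.prems(2))
  have G_Inl: "\<exists>v\<in>V g. c = Bcol (Some g) v" if "c \<in> G" "c (Inl g) \<noteq> 0" for c g
    using that unfolding Gdef by (auto simp: Bcol_Inl_Some Bcol_Inl_None split: if_splits)
  have lapl: "det ?M \<in> {-1,0,1}" if i: "i < ?k" and j: "j < ?k" and one: "?M $$ (i,j) = 1"
      and z: "\<forall>j'<?k. j' \<noteq> j \<longrightarrow> ?M $$ (i,j') = 0" for i j
  proof -
    have d: "det ?M = ?M $$ (i,j) * cofactor ?M i j" by (rule det_row_single[OF M i j z])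
    have ih: "det (msub (\<lambda>c. c) (dl i rs) (dl j cs)) \<in> {-1,0,1}"
    proof (rule less.hyps)
      show "length (dl j cs) * length (dl j cs) + nQ (dl j cs) < ?k * ?k + nQ cs"
        by (rule mu_dec) (use j in auto)
      show "distinct (dl i rs)" by (rule dl_distinct[OF less.prems(1)])
      show "length (dl i rs) = length (dl j cs)" using i j less.prems(2) by simp
      show "set (dl j cs) \<subseteq> G" by (rule subset_trans[OF dl_set less.prems(3)])
    qed
    show ?thesis by (rule det_pm_delete[OF d one _ _ ih]) (use i j less.prems(2) in auto)
  qed
  have laplc: "det ?M \<in> {-1,0,1}" if i: "i < ?k" and j: "j < ?k" and one: "?M $$ (i,j) = 1"
      and z: "\<forall>i'<?k. i' \<noteq> i \<longrightarrow> ?M $$ (i',j) = 0" for i j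
  proof -
    have d: "det ?M = ?M $$ (i,j) * cofactor ?M i j" by (rule det_col_single[OF M j i z])
    have ih: "det (msub (\<lambda>c. c) (dl i rs) (dl j cs)) \<in> {-1,0,1}"
    proof (rule less.hyps)
      show "length (dl j cs) * length (dl j cs) + nQ (dl j cs) < ?k * ?k + nQ cs"
        by (rule mu_dec) (use j in auto)
      show "distinct (dl i rs)" by (rule dl_distinct[OF less.prems(1)])
      show "length (dl i rs) = length (dl j cs)" using i j less.prems(2) by simp
      show "set (dl j cs) \<subseteq> G" by (rule subset_trans[OF dl_set less.prems(3)])
    qed
    show ?thesis by (rule det_pm_delete[OF d one _ _ ih]) (use i j less.prems(2) in auto)
  qed
  show ?case
  proof (cases "\<exists>i<?k. \<exists>g. rs ! i = Inl g")
    case True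
    then obtain i g where i: "i < ?k" "rs ! i = Inl g" by blast
    show ?thesis
    proof (cases "\<exists>j1<?k. \<exists>j2<?k. j1 \<noteq> j2 \<and> (cs!j1) (Inl g) \<noteq> 0 \<and> (cs!j2) (Inl g) \<noteq> 0")
      case True
      then obtain j1 j2 where j: "j1 < ?k" "j2 < ?k" "j1 \<noteq> j2" "(cs!j1) (Inl g) \<noteq> 0" "(cs!j2) (Inl g) \<noteq> 0"
        by blast
      have inG: "cs ! j1 \<in> G" "cs ! j2 \<in> G" using less.prems(3) j by auto
      obtain v1 where v1: "v1 \<in> V g" "cs ! j1 = Bcol (Some g) v1" using G_Inl[OF inG(1) j(4)] by blast
      obtain v2 where v2: "v2 \<in> V g" "cs ! j2 = Bcol (Some g) v2" using G_Inl[OF inG(2) j(5)] by blast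
      define cs' where "cs' = cs[j1 := Bcol None (\<lambda>w. v1 w - v2 w)]"
      have len': "length cs' = ?k" by (simp add: cs'_def)
      have eqM: "msub (\<lambda>c. c) rs cs' = addcol (-1) j1 j2 ?M"
        by (rule eq_matI) (use j less.prems(2) v1 v2 in \<open>auto simp: cs'_def Bcol_def nth_list_update split: sum.splits\<close>)
      have deq: "det (msub (\<lambda>c. c) rs cs') = det ?M"
        unfolding eqM by (rule det_addcol[OF j(2) j(3) M])
      have "det (msub (\<lambda>c. c) rs cs') \<in> {-1,0,1}"
      proof (rule less.hyps)
        have qq: "?Q (cs' ! j) \<longleftrightarrow> (j \<noteq> j1 \<and> ?Q (cs ! j))" if "j < ?k" for j
        proof (cases "j = j1")
          case True then show ?thesis using j by (simp add: cs'_def Bcol_Inl_None)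
        next
          case False then show ?thesis by (simp add: cs'_def)
        qed
        have setQ: "{j. j < length cs' \<and> ?Q (cs' ! j)} = {j. j < ?k \<and> ?Q (cs ! j)} - {j1}"
        proof (rule Set.set_eqI)
          fix j show "j \<in> {j. j < length cs' \<and> ?Q (cs' ! j)} \<longleftrightarrow> j \<in> {j. j < ?k \<and> ?Q (cs ! j)} - {j1}"
            using qq[of j] len' by auto
        qed
        have "j1 \<in> {j. j < ?k \<and> ?Q (cs ! j)}" using j by auto
        then have "card {j. j < length cs' \<and> ?Q (cs' ! j)} < card {j. j < ?k \<and> ?Q (cs ! j)}"
          unfolding setQ by (intro card_Diff1_less) auto
        then show "length cs' * length cs' + nQ cs' < ?k * ?k + nQ cs" using len' by (simp add: nQ_def)
        show "distinct rs" by (rule less.prems(1))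
        show "length rs = length cs'" using len' less.prems(2) by simp
        have "Bcol None (\<lambda>w. v1 w - v2 w) \<in> G" using A1 v1 v2 unfolding Gdef by blast
        then show "set cs' \<subseteq> G" using less.prems(3) unfolding cs'_def
          by (meson dual_order.trans set_update_subset_insert insert_subset)
      qed
      then show ?thesis using deq by simp
    next
      case False
      show ?thesis
      proof (cases "\<exists>j0<?k. (cs!j0) (Inl g) \<noteq> 0")
        case True
        then obtain j0 where j0: "j0 < ?k" "(cs!j0) (Inl g) \<noteq> 0" by blast
        have "cs ! j0 \<in> G" using less.prems(3) j0 by auto
        then obtain v where "cs ! j0 = Bcol (Some g) v" using G_Inl j0 by blast
        then have one: "?M $$ (i,j0) = 1" using i j0 less.prems(2) by (simp add: Bcol_Inl_Some)
        have z: "\<forall>j'<?k. j' \<noteq> j0 \<longrightarrow> ?M $$ (i,j') = 0" using False j0 i less.prems(2) by auto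
        show ?thesis by (rule lapl[OF _ j0(1) one z]) (use i in auto)
      next
        case False
        have "det ?M = 0" by (rule det_row_zero[OF M i(1)]) (use False i less.prems(2) in auto)
        then show ?thesis by simp
      qed
    qed
  next
    case False
    then have allr: "\<forall>i<?k. \<exists>w. rs ! i = Inr w" by (meson sum.exhaust)
    show ?thesis
    proof (cases "\<exists>j<?k. \<exists>w0. cs ! j = Bcol None (ind {w0})")
      case True
      then obtain j w0 where j: "j < ?k" "cs ! j = Bcol None (ind {w0})" by blast
      show ?thesis
      proof (cases "\<exists>i<?k. rs ! i = Inr w0")
        case True
        then obtain i where i: "i < ?k" "rs ! i = Inr w0" by blast
        have one: "?M $$ (i,j) = 1" using i j less.prems(2) by (simp add: Bcol_Inr ind_def)
        have z: "\<forall>i'<?k. i' \<noteq> i \<longrightarrow> ?M $$ (i',j) = 0"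
        proof (intro allI impI)
          fix i' assume i': "i' < ?k" "i' \<noteq> i"
          obtain w' where w': "rs ! i' = Inr w'" using allr i' by blast
          have "rs ! i' \<noteq> rs ! i"
            using i' i less.prems(1,2) nth_eq_iff_index_eq[of rs i' i] by simp
          then have "w' \<noteq> w0" using w' i by auto
          then show "?M $$ (i',j) = 0" using i' j w' less.prems(2) by (simp add: Bcol_Inr ind_def)
        qed
        show ?thesis by (rule laplc[OF i(1) j(1) one z])
      next
        case False
        have "det ?M = 0"
        proof (rule det_col_zero[OF M j(1)], intro allI impI)
          fix i' assume i': "i' < ?k"
          obtain w' where w': "rs ! i' = Inr w'" using allr i' by blast
          have "w' \<noteq> w0" using False i' w' by auto
          then show "?M $$ (i',j) = 0" using i' j w' less.prems(2) by (simp add: Bcol_Inr ind_def)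
        qed
        then show ?thesis by simp
      qed
    next
      case False
      define ws where "ws = map projr rs"
      define ds where "ds = map (\<lambda>c w. c (Inr w)) cs"
      have rsws: "rs ! i = Inr (ws ! i)" if "i < ?k" for i
        using allr that less.prems(2) by (auto simp: ws_def)
      have dws: "distinct ws"
      proof -
        have "inj_on projr (set rs)"
        proof (rule inj_onI)
          fix a b assume "a \<in> set rs" "b \<in> set rs" "projr a = projr b"
          then show "a = b" using allr less.prems(2) by (metis in_set_conv_nth sum.sel(2))
        qed
        then show ?thesis using less.prems(1) by (simp add: ws_def distinct_map)
      qed
      have dsD: "set ds \<subseteq> DD"
      proof
        fix d assume "d \<in> set ds"
        then obtain j where j: "j < ?k" "d = (\<lambda>w. (cs ! j) (Inr w))" by (auto simp: ds_def in_set_conv_nth)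
        have "cs ! j \<in> G" using j less.prems(3) by auto
        moreover have "\<forall>w0. cs ! j \<noteq> Bcol None (ind {w0})" using False j by blast
        ultimately show "d \<in> DD" using j A2 unfolding Gdef by (auto simp: Bcol_Inr)
      qed
      have "msub (\<lambda>d. d) ws ds = ?M"
        by (rule eq_matI) (use rsws less.prems(2) in \<open>auto simp: ws_def ds_def\<close>)
      moreover have "det (msub (\<lambda>d. d) ws ds) \<in> {-1,0,1}"
        using A3 dws dsD less.prems(2) by (simp add: ws_def ds_def)
      ultimately show ?thesis by simp
    qed
  qed
qed


definition Rv :: "('w \<Rightarrow> int) \<Rightarrow> 'w \<Rightarrow> real" where "Rv d = (\<lambda>w. real_of_int (d w))"

definition DDof :: "('w \<Rightarrow> int) set \<Rightarrow> ('w \<Rightarrow> real) set" where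
  "DDof D = {Rv d | d. d \<in> D \<or> (\<lambda>w. - d w) \<in> D \<or> d = (\<lambda>_. 0)}"

lemma Rv_inj: "Rv d1 = Rv d2 \<Longrightarrow> d1 = d2"
  by (auto simp: Rv_def fun_eq_iff)

lemma A3_base:
  assumes TU: "totally_unimodular D"
    and dw: "distinct ws" and len: "length ws = length ds" and inD: "set ds \<subseteq> Rv ` D"
  shows "det (msub (\<lambda>d. d) ws ds) \<in> {-1,0,1}"
proof (cases "distinct ds")
  case False
  then obtain j1 j2 where j: "j1 < length ds" "j2 < length ds" "j1 \<noteq> j2" "ds ! j1 = ds ! j2"
    by (metis distinct_conv_nth)
  have "det (msub (\<lambda>d. d) ws ds) = 0" by (rule msub_identical_cols[OF j len])
  then show ?thesis by simp
next
  case True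
  define es where "es = map (\<lambda>d. SOME e. e \<in> D \<and> d = Rv e) ds"
  have es: "es ! j \<in> D \<and> ds ! j = Rv (es ! j)" if "j < length ds" for j
  proof -
    have "\<exists>e. e \<in> D \<and> ds ! j = Rv e" using inD that by (metis image_iff nth_mem subsetD)
    then have "(SOME e. e \<in> D \<and> ds ! j = Rv e) \<in> D \<and> ds ! j = Rv (SOME e. e \<in> D \<and> ds ! j = Rv e)"
      by (rule someI_ex)
    then show ?thesis unfolding es_def using that by simp
  qed
  have les: "length es = length ds" by (simp add: es_def)
  have des: "distinct es"
  proof -
    have "es ! i \<noteq> es ! j" if "i < length es" "j < length es" "i \<noteq> j" for i j
    proof
      assume "es ! i = es ! j"
      then have "ds ! i = ds ! j" using es that les by metis
      then show False using True that les by (simp add: nth_eq_iff_index_eq)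
    qed
    then show ?thesis by (simp add: distinct_conv_nth)
  qed
  have sD: "set es \<subseteq> D" using es les by (metis in_set_conv_nth subsetI)
  let ?A = "mat (length ws) (length ws) (\<lambda>(i,j). (es!j) (ws!i))"
  have "det ?A \<in> {-1,0,1}" using TU dw des les len sD unfolding totally_unimodular_def by metis
  moreover have "msub (\<lambda>d. d) ws ds = map_mat real_of_int ?A"
    by (rule eq_matI) (use es len les in \<open>auto simp: Rv_def\<close>)
  ultimately show ?thesis by (auto simp: of_int_hom.hom_det)
qed

lemma A3:
  assumes TU: "totally_unimodular D"
  shows "distinct ws \<Longrightarrow> length ws = length ds \<Longrightarrow> set ds \<subseteq> DDof D \<Longrightarrow> det (msub (\<lambda>d. d) ws ds) \<in> {-1,0,1}"
proof (induction "card {j. j < length ds \<and> ds ! j \<notin> Rv ` D}" arbitrary: ds rule: less_induct)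
  case less
  let ?k = "length ds"
  have M: "msub (\<lambda>d. d) ws ds \<in> carrier_mat ?k ?k" by (metis msub_carrier less.prems(2))
  show ?case
  proof (cases "\<exists>j<?k. ds ! j = (\<lambda>_. 0)")
    case True
    then obtain j where j: "j < ?k" "ds ! j = (\<lambda>_. 0)" by blast
    have "det (msub (\<lambda>d. d) ws ds) = 0" by (rule det_col_zero[OF M j(1)]) (use j less.prems(2) in auto)
    then show ?thesis by simp
  next
    case nz: False
    show ?thesis
    proof (cases "\<exists>j<?k. ds ! j \<notin> Rv ` D")
      case False
      then have "set ds \<subseteq> Rv ` D" by (metis in_set_conv_nth subsetI)
      then show ?thesis by (rule A3_base[OF TU less.prems(1,2)])
    next
      case True
      then obtain j where j: "j < ?k" "ds ! j \<notin> Rv ` D" by blast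
      have "ds ! j \<in> DDof D" using less.prems(3) j by auto
      then obtain d where d: "ds ! j = Rv d" "d \<in> D \<or> (\<lambda>w. - d w) \<in> D \<or> d = (\<lambda>_. 0)"
        unfolding DDof_def by blast
      have dneg: "(\<lambda>w. - d w) \<in> D"
      proof -
        have "d \<notin> D" using d j by auto
        moreover have "d \<noteq> (\<lambda>_. 0)" using d nz j by (auto simp: Rv_def)
        ultimately show ?thesis using d by blast
      qed
      define ds' where "ds' = ds[j := Rv (\<lambda>w. - d w)]"
      have len': "length ds' = ?k" by (simp add: ds'_def)
      have M': "msub (\<lambda>d. d) ws ds' \<in> carrier_mat ?k ?k" by (metis msub_carrier less.prems(2) len')
      have neg: "det (msub (\<lambda>d. d) ws ds') = - det (msub (\<lambda>d. d) ws ds)"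
        by (rule det_col_neg[OF M M' j(1)]) (use j d less.prems(2) in \<open>auto simp: ds'_def Rv_def\<close>)
      have "det (msub (\<lambda>d. d) ws ds') \<in> {-1,0,1}"
      proof (rule less.hyps)
        have qq: "ds' ! i \<notin> Rv ` D \<longleftrightarrow> (i \<noteq> j \<and> ds ! i \<notin> Rv ` D)" if "i < ?k" for i
        proof (cases "i = j")
          case True then show ?thesis using j dneg by (simp add: ds'_def)
        next
          case False then show ?thesis by (simp add: ds'_def)
        qed
        have setQ: "{i. i < length ds' \<and> ds' ! i \<notin> Rv ` D} = {i. i < ?k \<and> ds ! i \<notin> Rv ` D} - {j}"
        proof (rule Set.set_eqI)
          fix i show "i \<in> {i. i < length ds' \<and> ds' ! i \<notin> Rv ` D} \<longleftrightarrow> i \<in> {i. i < ?k \<and> ds ! i \<notin> Rv ` D} - {j}"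
            using qq[of i] len' by auto
        qed
        have "j \<in> {i. i < ?k \<and> ds ! i \<notin> Rv ` D}" using j by auto
        then show "card {i. i < length ds' \<and> ds' ! i \<notin> Rv ` D} < card {i. i < ?k \<and> ds ! i \<notin> Rv ` D}"
          unfolding setQ by (intro card_Diff1_less) auto
        show "distinct ws" by (rule less.prems(1))
        show "length ws = length ds'" using len' less.prems(2) by simp
        have "Rv (\<lambda>w. - d w) \<in> DDof D" unfolding DDof_def using dneg by force
        then show "set ds' \<subseteq> DDof D" using less.prems(3) unfolding ds'_def
          by (meson dual_order.trans set_update_subset_insert insert_subset)
      qed
      then show ?thesis using neg by auto
    qed
  qed
qed


definition klist :: "('w set \<Rightarrow> 'w set \<Rightarrow> bool) \<Rightarrow> ('w \<Rightarrow> real) \<Rightarrow> nat list" where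
  "klist P X = filter (\<lambda>k. 0 < ts_of P X ! k) [0..<length (acc_list P)]"

lemma Bstar_Some: "Bstar PF M (Some f) = map (\<lambda>k. ind (acc_list (PF f) ! k)) (klist (PF f) (M (Some f)))
   @ (if sum_list (ts_of (PF f) (M (Some f))) = 1 then [] else [\<lambda>_. 0])"
  by (simp add: Bstar_def klist_def Let_def)

lemma Bstar_None: "Bstar PF M None = map (\<lambda>w. ind {w}) (sorted_list_of_set {w. 0 < M None w})"
  by (simp add: Bstar_def)

lemma klist_nth: "j < length (klist P X) \<Longrightarrow> klist P X ! j < length (acc_list P) \<and> 0 < ts_of P X ! (klist P X ! j)"
proof -
  assume "j < length (klist P X)"
  then have "klist P X ! j \<in> set (klist P X)" by simp
  then show ?thesis by (simp add: klist_def)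
qed

lemma klist_distinct: "distinct (klist P X)" by (simp add: klist_def)
lemma klist_set: "set (klist P X) = {k. k < length (acc_list P) \<and> 0 < ts_of P X ! k}"
  by (auto simp: klist_def)

lemma ind_empty: "ind {} = (\<lambda>_. 0)" by (simp add: ind_def fun_eq_iff)

lemma sum_01_pick:
  assumes fin: "finite S" and v: "\<forall>j\<in>S. a j \<in> {0, 1::real}" and s: "(\<Sum>j\<in>S. a j) = 1"
  shows "\<exists>j0\<in>S. a j0 = 1 \<and> (\<forall>j\<in>S. j \<noteq> j0 \<longrightarrow> a j = 0)"
proof -
  obtain j0 where j0: "j0 \<in> S" "a j0 \<noteq> 0" using s by (metis sum.neutral zero_neq_one)
  then have a0: "a j0 = 1" using v by auto
  have "a j = 0" if j: "j \<in> S" "j \<noteq> j0" for j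
  proof (rule ccontr)
    assume "a j \<noteq> 0"
    then have "a j = 1" using v j by auto
    have "(\<Sum>i\<in>{j0, j}. a i) \<le> (\<Sum>i\<in>S. a i)"
      by (rule sum_mono2) (use fin j j0 v in auto)
    then show False using a0 \<open>a j = 1\<close> j s by simp
  qed
  then show ?thesis using j0 a0 by blast
qed

lemma int01: "(x::real) \<in> \<int> \<Longrightarrow> 0 \<le> x \<Longrightarrow> x \<le> 1 \<Longrightarrow> x \<in> {0,1}"
proof -
  assume "x \<in> \<int>" "0 \<le> x" "x \<le> 1"
  then obtain n where n: "x = of_int n" by (auto elim: Ints_cases)
  then have "0 \<le> n" "n \<le> 1" using \<open>0 \<le> x\<close> \<open>x \<le> 1\<close> by auto
  then have "n = 0 \<or> n = 1" by auto
  then show ?thesis using n by auto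
qed

context
  fixes PW :: "'w::{finite,linorder} \<Rightarrow> 'f::finite option \<Rightarrow> 'f option \<Rightarrow> bool"
    and PF :: "'f \<Rightarrow> 'w set \<Rightarrow> 'w set \<Rightarrow> bool"
    and M :: "'f option \<Rightarrow> 'w \<Rightarrow> real"
  assumes stW: "\<forall>w. strict_total (PW w)"
    and stF: "\<forall>f. strict_total (PF f)"
    and match: "is_matching M"
    and stab: "stable PW PF M"
    and TU: "totally_unimodular (\<Union>f. demand_type (PF f))"
begin

lemma Mnn: "0 \<le> M fo w" using match by (simp add: is_matching_def is_pseudo_def)
lemma Msum: "(\<Sum>fo\<in>UNIV. M fo w) = 1" using match by (simp add: is_matching_def)
lemma Xnn: "\<forall>i. 0 \<le> M (Some f) i" using Mnn by blast
lemma stab1: "M (Some f) = chhat (PF f) (M (Some f))" using stab by (simp add: stable_def)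
lemma stab1b: "PW w None (Some f) \<Longrightarrow> M (Some f) w = 0" using stab by (simp add: stable_def)
lemma stab2: "\<not> (\<exists>f M''. (\<forall>w. 0 \<le> M'' w \<and> M'' w \<le> 1) \<and> firm_prefers (PF f) M'' (M (Some f)) \<and>
            (\<forall>w. M'' w \<le> A_le PW M f w))" using stab by (simp add: stable_def)

lemma col_Some:
  assumes j: "j < length (Bstar PF M (Some f))"
  shows "(j < length (klist (PF f) (M (Some f))) \<and> Bstar PF M (Some f) ! j = ind (acc_list (PF f) ! (klist (PF f) (M (Some f)) ! j)))
       \<or> (j = length (klist (PF f) (M (Some f))) \<and> Bstar PF M (Some f) ! j = (\<lambda>_. 0) \<and> sum_list (ts_of (PF f) (M (Some f))) \<noteq> 1)"
proof (cases "j < length (klist (PF f) (M (Some f)))")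
  case True then show ?thesis by (simp add: Bstar_Some nth_append)
next
  case False then show ?thesis using j by (auto simp: Bstar_Some nth_append split: if_splits)
qed

lemma col_None:
  assumes j: "j < length (Bstar PF M None)"
  shows "\<exists>w. 0 < M None w \<and> Bstar PF M None ! j = ind {w}"
proof -
  let ?l = "sorted_list_of_set {w. 0 < M None w}"
  have jl: "j < length ?l" using j by (simp add: Bstar_None)
  have "set ?l = {w. 0 < M None w}" by simp
  then have "0 < M None (?l ! j)" using nth_mem[OF jl] by blast
  then show ?thesis using j by (auto simp: Bstar_None)
qed

lemma col01: "j < length (Bstar PF M fo) \<Longrightarrow> (Bstar PF M fo ! j) w \<in> {0, 1}"
proof (cases fo)
  case None
  assume "j < length (Bstar PF M fo)"
  then obtain w0 where "Bstar PF M None ! j = ind {w0}" using col_None None by blast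
  then show ?thesis using None by (auto simp: ind_def)
next
  case (Some f)
  assume "j < length (Bstar PF M fo)"
  then show ?thesis using col_Some[of j f] Some by (auto simp: ind_def)
qed

lemma colpos: "j < length (Bstar PF M fo) \<Longrightarrow> (Bstar PF M fo ! j) w \<noteq> 0 \<Longrightarrow> 0 < M fo w"
proof (cases fo)
  case None
  assume "j < length (Bstar PF M fo)" "(Bstar PF M fo ! j) w \<noteq> 0"
  moreover obtain w0 where "0 < M None w0" "Bstar PF M None ! j = ind {w0}" using col_None None calculation by blast
  ultimately show ?thesis using None by (auto simp: ind_def split: if_splits)
next
  case (Some f)
  assume j: "j < length (Bstar PF M fo)" and nz: "(Bstar PF M fo ! j) w \<noteq> 0"
  from col_Some[of j f] j nz Some
  have a: "j < length (klist (PF f) (M (Some f))) \<and> w \<in> acc_list (PF f) ! (klist (PF f) (M (Some f)) ! j)"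
    by (auto simp: ind_def split: if_splits)
  then show ?thesis using pos_x[OF stF[rule_format] Xnn] klist_nth[of j] Some by blast
qed


lemma sum_kl:
  "(\<Sum>j<length (klist (PF f) (M (Some f))). ts_of (PF f) (M (Some f)) ! (klist (PF f) (M (Some f)) ! j) * F (klist (PF f) (M (Some f)) ! j))
   = (\<Sum>k<length (acc_list (PF f)). ts_of (PF f) (M (Some f)) ! k * F k)"
proof -
  let ?kl = "klist (PF f) (M (Some f))" and ?t = "ts_of (PF f) (M (Some f))"
  have "(\<Sum>j<length ?kl. ?t ! (?kl ! j) * F (?kl ! j)) = (\<Sum>k\<in>set ?kl. ?t ! k * F k)"
    by (rule sum_set_nth[OF klist_distinct, symmetric])
  also have "\<dots> = (\<Sum>k<length (acc_list (PF f)). ?t ! k * F k)"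
  proof (rule sum.mono_neutral_left)
    show "set ?kl \<subseteq> {..<length (acc_list (PF f))}" by (auto simp: klist_set)
    show "\<forall>k\<in>{..<length (acc_list (PF f))} - set ?kl. ?t ! k * F k = 0"
    proof
      fix k assume k: "k \<in> {..<length (acc_list (PF f))} - set ?kl"
      then have "\<not> 0 < ?t ! k" "0 \<le> ?t ! k" using tnn[OF stF[rule_format] Xnn] by (auto simp: klist_set)
      then show "?t ! k * F k = 0" by simp
    qed
  qed simp
  finally show ?thesis .
qed

lemma Rv_ind: "ind u = Rv (indI u)" by (simp add: Rv_def ind_def indI_def fun_eq_iff)

lemma inDD_D: "d \<in> demand_type (PF f) \<Longrightarrow> Rv d \<in> DDof (\<Union>f. demand_type (PF f))"
  unfolding DDof_def by blast

lemma inDD_negD: assumes "d \<in> demand_type (PF f)" shows "Rv (\<lambda>w. - d w) \<in> DDof (\<Union>f. demand_type (PF f))"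
proof -
  have "(\<lambda>w. - (- d w)) \<in> (\<Union>f. demand_type (PF f))" using assms by auto
  then show ?thesis unfolding DDof_def by blast
qed

lemma inDD_0: "(\<lambda>_. 0) \<in> DDof D"
proof -
  have "(\<lambda>_. 0) = Rv (\<lambda>_. 0) \<and> ((\<lambda>_. 0) \<in> D \<or> (\<lambda>w. - (0::int)) \<in> D \<or> (\<lambda>_. 0::int) = (\<lambda>_. 0))"
    by (simp add: Rv_def)
  then show ?thesis unfolding DDof_def by blast
qed

definition "Vf f = {ind (acc_list (PF f) ! k) | k. k < length (acc_list (PF f)) \<and> 0 < ts_of (PF f) (M (Some f)) ! k} \<union> {\<lambda>_. 0}"

lemma A2V: assumes "v \<in> Vf f" shows "v \<in> DDof (\<Union>f. demand_type (PF f))"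
proof (cases "v = (\<lambda>_. 0)")
  case True then show ?thesis using inDD_0 by simp
next
  case False
  then obtain k where k: "k < length (acc_list (PF f))" "0 < ts_of (PF f) (M (Some f)) ! k" "v = ind (acc_list (PF f) ! k)"
    using assms unfolding Vf_def by blast
  have "Rv (indI (acc_list (PF f) ! k)) \<in> DDof (\<Union>f. demand_type (PF f))"
    by (rule inDD_D[OF DT1[OF stF[rule_format] Xnn k(1,2)]])
  then show ?thesis using k(3) Rv_ind[of "acc_list (PF f) ! k"] by simp
qed

lemma A1V:
  assumes v1: "v1 \<in> Vf f" and v2: "v2 \<in> Vf f"
  shows "(\<lambda>w. v1 w - v2 w) \<in> DDof (\<Union>f. demand_type (PF f))"
proof -
  let ?u = "\<lambda>k. acc_list (PF f) ! k" and ?t = "ts_of (PF f) (M (Some f))" and ?L = "length (acc_list (PF f))"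
  note DT1' = DT1[OF stF[rule_format] Xnn] and DT2' = DT2[OF stF[rule_format] Xnn]
  show ?thesis
  proof (cases "v2 = (\<lambda>_. 0)")
    case True
    then show ?thesis using A2V[OF v1] by simp
  next
    case F2: False
    then obtain b where b: "b < ?L" "0 < ?t ! b" "v2 = ind (?u b)" using v2 unfolding Vf_def by blast
    show ?thesis
    proof (cases "v1 = (\<lambda>_. 0)")
      case True
      have "(\<lambda>w. v1 w - v2 w) = Rv (\<lambda>w. - indI (?u b) w)" using True b by (simp add: Rv_def ind_def indI_def fun_eq_iff)
      then show ?thesis using inDD_negD[OF DT1'[OF b(1,2)]] by simp
    next
      case False
      then obtain a where a: "a < ?L" "0 < ?t ! a" "v1 = ind (?u a)" using v1 unfolding Vf_def by blast
      consider "a = b" | "a < b" | "b < a" by arith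
      then show ?thesis
      proof cases
        case 1 then show ?thesis using a b inDD_0 by simp
      next
        case 2
        have "(\<lambda>w. v1 w - v2 w) = Rv (\<lambda>w. indI (?u a) w - indI (?u b) w)" using a b by (simp add: Rv_def ind_def indI_def fun_eq_iff)
        then show ?thesis using inDD_D[OF DT2'[OF 2 b(1) a(2) b(2)]] by simp
      next
        case 3
        have "(\<lambda>w. v1 w - v2 w) = Rv (\<lambda>w. - (indI (?u b) w - indI (?u a) w))" using a b by (simp add: Rv_def ind_def indI_def fun_eq_iff)
        then show ?thesis using inDD_negD[OF DT2'[OF 3 a(1) b(2) a(2)]] by simp
      qed
    qed
  qed
qed

definition "CC = Sigma UNIV (\<lambda>fo. {..<length (Bstar PF M fo)})"
definition "Acol c r = (if c \<in> CC then Bcol (fst c) (Bstar PF M (fst c) ! snd c) r else 0)"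

lemma CC_fin: "finite CC" unfolding CC_def by (intro finite_SigmaI) auto

lemma col_in_G:
  assumes c: "c \<in> CC"
  shows "Acol c \<in> {Bcol (Some f) v | f v. v \<in> Vf f} \<union> {Bcol None d | d. d \<in> DDof (\<Union>f. demand_type (PF f))} \<union> {Bcol None (ind {w}) | w. True}"
proof -
  obtain fo j where cj: "c = (fo, j)" "j < length (Bstar PF M fo)" using c unfolding CC_def by auto
  have A: "Acol c = Bcol fo (Bstar PF M fo ! j)" using c cj by (simp add: Acol_def fun_eq_iff)
  show ?thesis
  proof (cases fo)
    case None
    then obtain w where "Bstar PF M None ! j = ind {w}" using col_None cj by blast
    then have "Acol c = Bcol None (ind {w})" using A None by simp
    then show ?thesis by blast
  next
    case (Some f)
    have "Bstar PF M (Some f) ! j \<in> Vf f"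
      using col_Some[of j f] cj Some klist_nth[of j "PF f" "M (Some f)"] unfolding Vf_def by auto
    then show ?thesis using A Some by blast
  qed
qed

lemma TUcols:
  "\<forall>rs cs. distinct rs \<and> distinct cs \<and> set cs \<subseteq> CC \<and> length rs = length cs \<longrightarrow> det (msub Acol rs cs) \<in> {-1,0,1}"
proof (intro allI impI)
  fix rs :: "('f + 'w) list"
  fix cs :: "('f option \<times> nat) list"
  assume a: "distinct rs \<and> distinct cs \<and> set cs \<subseteq> CC \<and> length rs = length cs"
  have eq: "msub Acol rs cs = msub (\<lambda>c. c) rs (map Acol cs)"
    by (rule eq_matI) (use a in auto)
  have "det (msub (\<lambda>c. c) rs (map Acol cs)) \<in> {-1,0,1}"
  proof (rule GEN[where V = Vf and DD = "DDof (\<Union>f. demand_type (PF f))"])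
    show "\<forall>f v1 v2. v1 \<in> Vf f \<longrightarrow> v2 \<in> Vf f \<longrightarrow> (\<lambda>w. v1 w - v2 w) \<in> DDof (\<Union>f. demand_type (PF f))"
      using A1V by blast
    show "\<forall>f v. v \<in> Vf f \<longrightarrow> v \<in> DDof (\<Union>f. demand_type (PF f))" using A2V by blast
    show "\<forall>ws ds. distinct ws \<and> set ds \<subseteq> DDof (\<Union>f. demand_type (PF f)) \<and> length ws = length ds \<longrightarrow>
      det (msub (\<lambda>d. d) ws ds) \<in> {-1,0,1}"
    proof (intro allI impI)
      fix ws :: "'w list" and ds assume "distinct ws \<and> set ds \<subseteq> DDof (\<Union>f. demand_type (PF f)) \<and> length ws = length ds"
      then show "det (msub (\<lambda>d. d) ws ds) \<in> {-1,0,1}" using A3[OF TU, of ws ds] by simp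
    qed
    show "distinct rs" using a by simp
    show "length rs = length (map Acol cs)" using a by simp
    show "set (map Acol cs) \<subseteq> {Bcol (Some f) v | f v. v \<in> Vf f} \<union> {Bcol None d | d. d \<in> DDof (\<Union>f. demand_type (PF f))} \<union> {Bcol None (ind {w}) | w. True}"
    proof
      fix v assume "v \<in> set (map Acol cs)"
      then obtain c where "c \<in> set cs" "v = Acol c" by auto
      then show "v \<in> {Bcol (Some f) v | f v. v \<in> Vf f} \<union> {Bcol None d | d. d \<in> DDof (\<Union>f. demand_type (PF f))} \<union> {Bcol None (ind {w}) | w. True}"
        using col_in_G a by blast
    qed
  qed (rule refl)
  then show "det (msub Acol rs cs) \<in> {-1,0,1}" unfolding eq .
qed


definition "wl = sorted_list_of_set {w. 0 < M None w}"

definition "xfr c = (case c of (Some f, j) \<Rightarrow>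
   (if j < length (klist (PF f) (M (Some f))) then ts_of (PF f) (M (Some f)) ! (klist (PF f) (M (Some f)) ! j)
    else if j = length (klist (PF f) (M (Some f))) \<and> sum_list (ts_of (PF f) (M (Some f))) \<noteq> 1
    then 1 - sum_list (ts_of (PF f) (M (Some f))) else 0)
  | (None, j) \<Rightarrow> (if j < length wl then M None (wl ! j) else 0))"

lemma sumCC: "(\<Sum>c\<in>CC. y c * Acol c r) = (\<Sum>fo\<in>UNIV. \<Sum>j<length (Bstar PF M fo). y (fo, j) * Bcol fo (Bstar PF M fo ! j) r)"
proof -
  have "(\<Sum>c\<in>CC. y c * Acol c r) = (\<Sum>(fo, j)\<in>CC. y (fo, j) * Bcol fo (Bstar PF M fo ! j) r)"
    by (rule sum.cong) (auto simp: Acol_def)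
  also have "\<dots> = (\<Sum>fo\<in>UNIV. \<Sum>j<length (Bstar PF M fo). y (fo, j) * Bcol fo (Bstar PF M fo ! j) r)"
    unfolding CC_def by (rule sum.Sigma[symmetric]) auto
  finally show ?thesis .
qed

lemma len_Some: "length (Bstar PF M (Some f)) = length (klist (PF f) (M (Some f))) + (if sum_list (ts_of (PF f) (M (Some f))) = 1 then 0 else 1)"
  by (simp add: Bstar_Some)

lemma inner_Some:
  "(\<Sum>j<length (Bstar PF M (Some f)). y j * Bcol (Some f) (Bstar PF M (Some f) ! j) r)
   = (\<Sum>j<length (klist (PF f) (M (Some f))). y j * Bcol (Some f) (ind (acc_list (PF f) ! (klist (PF f) (M (Some f)) ! j))) r)
     + (if sum_list (ts_of (PF f) (M (Some f))) = 1 then 0 else y (length (klist (PF f) (M (Some f)))) * Bcol (Some f) (\<lambda>_. 0) r)"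
proof -
  let ?n = "length (klist (PF f) (M (Some f)))"
  have a: "(\<Sum>j<?n. y j * Bcol (Some f) (Bstar PF M (Some f) ! j) r)
     = (\<Sum>j<?n. y j * Bcol (Some f) (ind (acc_list (PF f) ! (klist (PF f) (M (Some f)) ! j))) r)"
    by (rule sum.cong) (auto simp: Bstar_Some nth_append)
  show ?thesis
  proof (cases "sum_list (ts_of (PF f) (M (Some f))) = 1")
    case True then show ?thesis using a by (simp add: len_Some)
  next
    case False
    have "Bstar PF M (Some f) ! ?n = (\<lambda>_. 0)" using False by (simp add: Bstar_Some nth_append)
    then show ?thesis using a False by (simp add: len_Some)
  qed
qed

lemma sum_ts_eq: "sum_list (ts_of (PF f) (M (Some f))) = (\<Sum>k<length (acc_list (PF f)). ts_of (PF f) (M (Some f)) ! k)"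
  using sum_ts[OF stF[rule_format] Xnn] by (simp add: SS_def)

lemma sum_ts_le1: "sum_list (ts_of (PF f) (M (Some f))) \<le> 1"
  using sum_ts[OF stF[rule_format] Xnn] SS_le1[OF stF[rule_format] Xnn] by simp

lemma inner_x:
  "(\<Sum>j<length (Bstar PF M fo). xfr (fo, j) * Bcol fo (Bstar PF M fo ! j) r)
   = (case r of Inl g \<Rightarrow> if fo = Some g then 1 else 0 | Inr w \<Rightarrow> M fo w)"
proof (cases fo)
  case (Some f)
  let ?kl = "klist (PF f) (M (Some f))" and ?t = "ts_of (PF f) (M (Some f))"
  have x1: "xfr (Some f, j) = ?t ! (?kl ! j)" if "j < length ?kl" for j using that by (simp add: xfr_def)
  have x2: "xfr (Some f, length ?kl) = (if sum_list ?t \<noteq> 1 then 1 - sum_list ?t else 0)" by (simp add: xfr_def)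
  have s1: "(\<Sum>j<length ?kl. xfr (Some f, j) * Bcol (Some f) (ind (acc_list (PF f) ! (?kl ! j))) r)
     = (\<Sum>k<length (acc_list (PF f)). ?t ! k * Bcol (Some f) (ind (acc_list (PF f) ! k)) r)"
    using sum_kl[of f "\<lambda>k. Bcol (Some f) (ind (acc_list (PF f) ! k)) r"] x1 by simp
  show ?thesis
  proof (cases r)
    case (Inl g)
    have "(\<Sum>k<length (acc_list (PF f)). ?t ! k * Bcol (Some f) (ind (acc_list (PF f) ! k)) r)
        = (if g = f then sum_list ?t else 0)"
      using Inl by (simp add: Bcol_Inl_Some sum_ts_eq)
    then show ?thesis using Some Inl s1 inner_Some[where f=f and y="\<lambda>j. xfr (Some f, j)" and r=r] x2
      by (auto simp: Bcol_Inl_Some)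
  next
    case (Inr w)
    have "(\<Sum>k<length (acc_list (PF f)). ?t ! k * Bcol (Some f) (ind (acc_list (PF f) ! k)) r) = chhat (PF f) (M (Some f)) w"
      using Inr by (simp add: Bcol_Inr chhat_def)
    also have "\<dots> = M (Some f) w" using stab1[of f] by simp
    finally show ?thesis using Some Inr s1 inner_Some[where f=f and y="\<lambda>j. xfr (Some f, j)" and r=r]
      by (simp add: Bcol_Inr)
  qed
next
  case None
  have dwl: "distinct wl" by (simp add: wl_def)
  have "(\<Sum>j<length (Bstar PF M None). xfr (None, j) * Bcol None (Bstar PF M None ! j) r)
      = (\<Sum>j<length wl. M None (wl ! j) * Bcol None (ind {wl ! j}) r)"
    by (rule sum.cong) (auto simp: xfr_def Bstar_None wl_def)
  also have "\<dots> = (\<Sum>w'\<in>set wl. M None w' * Bcol None (ind {w'}) r)"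
    by (rule sum_set_nth[OF dwl, symmetric])
  also have "\<dots> = (case r of Inl g \<Rightarrow> 0 | Inr w \<Rightarrow> M None w)"
  proof (cases r)
    case (Inl g) then show ?thesis by (simp add: Bcol_Inl_None)
  next
    case (Inr w)
    have "(\<Sum>w'\<in>set wl. M None w' * Bcol None (ind {w'}) r) = (\<Sum>w'\<in>set wl. if w' = w then M None w' else 0)"
      using Inr by (intro sum.cong) (auto simp: Bcol_Inr ind_def)
    also have "\<dots> = (if w \<in> set wl then M None w else 0)" by (simp add: sum.delta)
    also have "\<dots> = M None w" using Mnn[of None w] by (auto simp: wl_def)
    finally show ?thesis using Inr by simp
  qed
  finally show ?thesis using None by (cases r) auto
qed

lemma Z_exists:
  "\<exists>z :: 'f option \<Rightarrow> nat \<Rightarrow> real.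
     (\<forall>fo j. j < length (Bstar PF M fo) \<longrightarrow> z fo j \<in> {0, 1}) \<and>
     (\<forall>r. (\<Sum>fo\<in>UNIV. \<Sum>j<length (Bstar PF M fo). z fo j * Bcol fo (Bstar PF M fo ! j) r) = 1)"
proof -
  have Aval: "Acol c r \<in> {0, 1}" for c r
  proof (cases "c \<in> CC")
    case True
    then obtain fo j where cj: "c = (fo, j)" "j < length (Bstar PF M fo)" unfolding CC_def by auto
    show ?thesis
    proof (cases r)
      case (Inl g) then show ?thesis using True cj by (cases fo) (auto simp: Acol_def Bcol_def)
    next
      case (Inr w) then show ?thesis using True cj col01[of j fo w] by (simp add: Acol_def Bcol_Inr)
    qed
  qed (simp add: Acol_def)
  have Ann: "0 \<le> Acol c r" for c r using Aval[of c r] by auto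
  have Aint: "\<forall>c r. Acol c r \<in> \<int>" by (metis Aval Ints_0 Ints_1 empty_iff insert_iff)
  have xnn: "\<forall>c. 0 \<le> xfr c"
  proof
    fix c show "0 \<le> xfr c"
    proof (cases c)
      case (Pair fo j)
      show ?thesis
      proof (cases fo)
        case None then show ?thesis using Pair Mnn by (simp add: xfr_def)
      next
        case (Some f)
        then show ?thesis using Pair sum_ts_le1[of f] klist_nth[of j "PF f" "M (Some f)"]
          by (auto simp: xfr_def less_imp_le)
      qed
    qed
  qed
  have xout: "\<forall>c. c \<notin> CC \<longrightarrow> xfr c = 0"
  proof (intro allI impI)
    fix c assume "c \<notin> CC"
    then obtain fo j where cj: "c = (fo, j)" "\<not> j < length (Bstar PF M fo)" unfolding CC_def by (cases c) auto
    show "xfr c = 0"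
    proof (cases fo)
      case None then show ?thesis using cj by (simp add: xfr_def Bstar_None wl_def)
    next
      case (Some f) then show ?thesis using cj by (auto simp: xfr_def len_Some split: if_splits)
    qed
  qed
  have xsum: "\<forall>r. (\<Sum>c\<in>CC. xfr c * Acol c r) = 1"
  proof
    fix r
    have "(\<Sum>c\<in>CC. xfr c * Acol c r) = (\<Sum>fo\<in>UNIV. case r of Inl g \<Rightarrow> if fo = Some g then 1 else 0 | Inr w \<Rightarrow> M fo w)"
      unfolding sumCC inner_x by simp
    also have "\<dots> = 1" using Msum by (cases r) auto
    finally show "(\<Sum>c\<in>CC. xfr c * Acol c r) = 1" .
  qed
  obtain z where z: "\<forall>c. z c \<in> \<int> \<and> 0 \<le> z c" "\<forall>c. c \<notin> CC \<longrightarrow> z c = 0" "\<forall>r. (\<Sum>c\<in>CC. z c * Acol c r) = 1"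
    using INTEG[OF CC_fin Aint _ TUcols, of "\<lambda>_. 1" xfr] xnn xout xsum by auto
  define zz where "zz fo j = z (fo, j)" for fo j
  have Z2: "\<forall>r. (\<Sum>fo\<in>UNIV. \<Sum>j<length (Bstar PF M fo). zz fo j * Bcol fo (Bstar PF M fo ! j) r) = 1"
    using z(3) unfolding sumCC zz_def by simp
  have Z1: "zz fo j \<in> {0, 1}" if j: "j < length (Bstar PF M fo)" for fo j
  proof -
    have cC: "(fo, j) \<in> CC" using j by (simp add: CC_def)
    obtain r0 where r0: "Acol (fo, j) r0 = 1"
    proof (cases fo)
      case None
      then obtain w where "Bstar PF M None ! j = ind {w}" using col_None j by blast
      then show ?thesis using that[of "Inr w"] cC None by (simp add: Acol_def Bcol_Inr ind_def)
    next
      case (Some f) then show ?thesis using that[of "Inl f"] cC by (simp add: Acol_def Bcol_Inl_Some)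
    qed
    have "z (fo, j) * Acol (fo, j) r0 \<le> (\<Sum>c\<in>CC. z c * Acol c r0)"
      by (rule member_le_sum[OF cC]) (use z(1) Ann CC_fin in \<open>auto intro!: mult_nonneg_nonneg\<close>)
    then have "z (fo, j) \<le> 1" using r0 z(3) by simp
    then show ?thesis using z(1) int01 by (simp add: zz_def)
  qed
  show ?thesis using Z1 Z2 by blast
qed


lemma A_le_ge: "(\<forall>fo w. 0 \<le> N fo w) \<Longrightarrow> N (Some f) w \<le> A_le PW N f w"
  unfolding A_le_def by (rule member_le_sum) auto

lemma A_le_nn: "(\<forall>fo w. 0 \<le> N fo w) \<Longrightarrow> 0 \<le> A_le PW N f w"
  unfolding A_le_def by (rule sum_nonneg) auto

lemma tsQ: "ts_of (PF f) (A_le PW M f) = ts_of (PF f) (M (Some f))"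
proof -
  let ?P = "PF f" and ?X = "M (Some f)" and ?Q = "A_le PW M f"
  have st: "strict_total ?P" using stF by blast
  have Qnn: "\<forall>i. 0 \<le> ?Q i" using A_le_nn[of M] Mnn by blast
  have XQ: "\<forall>i. ?X i \<le> ?Q i" using A_le_ge[of M] Mnn by blast
  let ?M'' = "chhat ?P ?Q"
  have le: "\<forall>w. ?M'' w \<le> ?Q w" using chhat_le[OF st Qnn] by blast
  have c1: "chhat ?P (\<lambda>w. max (?M'' w) (?X w)) = ?M''"
    by (rule IRC_chhat[OF st Qnn]) (use le XQ in auto)
  have eq: "?M'' = ?X"
  proof (rule ccontr)
    assume ne: "?M'' \<noteq> ?X"
    have "firm_prefers ?P ?M'' ?X" unfolding firm_prefers_def using c1 ne by simp
    moreover have "\<forall>w. 0 \<le> ?M'' w \<and> ?M'' w \<le> 1" using chhat_nn[OF st Qnn] chhat_le1[OF st Qnn] by blast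
    ultimately show False using stab2 le by blast
  qed
  show ?thesis
    by (rule IRC[OF st Qnn, symmetric]) (use eq XQ in auto)
qed

lemma Mprime_good:
  fixes z :: "'f option \<Rightarrow> nat \<Rightarrow> real"
  assumes Z1: "\<forall>fo j. j < length (Bstar PF M fo) \<longrightarrow> z fo j \<in> {0, 1}"
    and Z2: "\<forall>r. (\<Sum>fo\<in>UNIV. \<Sum>j<length (Bstar PF M fo). z fo j * Bcol fo (Bstar PF M fo ! j) r) = 1"
  shows "is_matching (\<lambda>fo w. \<Sum>j<length (Bstar PF M fo). z fo j * (Bstar PF M fo ! j) w) \<and>
         integral (\<lambda>fo w. \<Sum>j<length (Bstar PF M fo). z fo j * (Bstar PF M fo ! j) w) \<and>
         stable PW PF (\<lambda>fo w. \<Sum>j<length (Bstar PF M fo). z fo j * (Bstar PF M fo ! j) w)"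
proof -
  define M' where "M' = (\<lambda>fo w. \<Sum>j<length (Bstar PF M fo). z fo j * (Bstar PF M fo ! j) w)"
  have termnn: "0 \<le> z fo j * (Bstar PF M fo ! j) w" if "j < length (Bstar PF M fo)" for fo j w
  proof -
    have a: "z fo j \<in> {0, 1}" using Z1 that by blast
    have b: "(Bstar PF M fo ! j) w \<in> {0, 1}" by (rule col01[OF that])
    show ?thesis using a b by auto
  qed
  have M'nn: "0 \<le> M' fo w" for fo w unfolding M'_def by (rule sum_nonneg) (use termnn in auto)
  have M'sum: "(\<Sum>fo\<in>UNIV. M' fo w) = 1" for w
    using Z2[rule_format, of "Inr w"] by (simp add: M'_def Bcol_Inr)
  have M'le1: "M' fo w \<le> 1" for fo w
  proof -
    have "M' fo w \<le> (\<Sum>fo\<in>UNIV. M' fo w)" by (rule member_le_sum) (use M'nn in auto)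
    then show ?thesis using M'sum by simp
  qed
  have M'int: "M' fo w \<in> \<int>" for fo w
    unfolding M'_def
  proof (rule Ints_sum)
    fix j assume "j \<in> {..<length (Bstar PF M fo)}"
    then have j: "j < length (Bstar PF M fo)" by simp
    have "z fo j \<in> {0, 1}" using Z1 j by blast
    then have "z fo j \<in> \<int>" by auto
    moreover have "(Bstar PF M fo ! j) w \<in> \<int>" using col01[OF j, of w] by auto
    ultimately show "z fo j * (Bstar PF M fo ! j) w \<in> \<int>" by (rule Ints_mult)
  qed
  have M'01: "M' fo w \<in> {0, 1}" for fo w using int01[OF M'int M'nn M'le1] .
  have pick_f: "\<exists>j0 < length (Bstar PF M (Some f)). M' (Some f) = Bstar PF M (Some f) ! j0" for f
  proof -
    have rowf: "(\<Sum>j<length (Bstar PF M (Some f)). z (Some f) j) = 1"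
    proof -
      have "(\<Sum>fo\<in>UNIV. \<Sum>j<length (Bstar PF M fo). z fo j * Bcol fo (Bstar PF M fo ! j) (Inl f))
          = (\<Sum>fo\<in>UNIV. if fo = Some f then (\<Sum>j<length (Bstar PF M fo). z fo j) else 0)"
        by (rule sum.cong) (auto simp: Bcol_def)
      also have "\<dots> = (\<Sum>j<length (Bstar PF M (Some f)). z (Some f) j)" by (simp add: sum.delta)
      finally show ?thesis using Z2[rule_format, of "Inl f"] by simp
    qed
    obtain j0 where j0: "j0 \<in> {..<length (Bstar PF M (Some f))}" "z (Some f) j0 = 1"
        "\<forall>j\<in>{..<length (Bstar PF M (Some f))}. j \<noteq> j0 \<longrightarrow> z (Some f) j = 0"
      using sum_01_pick[of "{..<length (Bstar PF M (Some f))}" "z (Some f)"] Z1 rowf by auto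
    have pw: "M' (Some f) w = (Bstar PF M (Some f) ! j0) w" for w
    proof -
      have "M' (Some f) w = (\<Sum>j<length (Bstar PF M (Some f)). if j = j0 then (Bstar PF M (Some f) ! j) w else 0)"
        unfolding M'_def by (rule sum.cong) (use j0 in auto)
      also have "\<dots> = (Bstar PF M (Some f) ! j0) w" using j0(1) by (simp add: sum.delta)
      finally show ?thesis .
    qed
    have "M' (Some f) = Bstar PF M (Some f) ! j0" by (rule ext) (rule pw)
    moreover have "j0 < length (Bstar PF M (Some f))" using j0(1) by simp
    ultimately show ?thesis by blast
  qed
  have M'pos: "0 < M g w" if "M' g w \<noteq> 0" for g w
  proof -
    have "(\<Sum>j<length (Bstar PF M g). z g j * (Bstar PF M g ! j) w) \<noteq> 0" using that by (simp add: M'_def)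
    then obtain j where j: "j \<in> {..<length (Bstar PF M g)}" "z g j * (Bstar PF M g ! j) w \<noteq> 0"
      by (rule sum.not_neutral_contains_not_neutral)
    then have "j < length (Bstar PF M g)" "(Bstar PF M g ! j) w \<noteq> 0" by auto
    then show ?thesis by (rule colpos)
  qed
  have stabf: "M' (Some f) = chhat (PF f) (M' (Some f)) \<and> (\<forall>w. PW w None (Some f) \<longrightarrow> M' (Some f) w = 0) \<and>
     \<not> (\<exists>M''. (\<forall>w. 0 \<le> M'' w \<and> M'' w \<le> 1) \<and> firm_prefers (PF f) M'' (M' (Some f)) \<and> (\<forall>w. M'' w \<le> A_le PW M' f w))" for f
  proof -
    let ?P = "PF f" and ?X = "M (Some f)" and ?L = "length (acc_list (PF f))"
    let ?u = "\<lambda>k. acc_list (PF f) ! k" and ?t = "ts_of (PF f) (M (Some f))"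
    let ?kl = "klist (PF f) (M (Some f))"
    have st: "strict_total ?P" using stF by blast
    have Xnn': "\<forall>i. 0 \<le> ?X i" using Mnn by blast
    obtain j0 where j0: "j0 < length (Bstar PF M (Some f))" "M' (Some f) = Bstar PF M (Some f) ! j0"
      using pick_f by blast
    let ?Q = "A_le PW M f"
    have Qnn: "\<forall>i. 0 \<le> ?Q i" using A_le_nn[of M] Mnn by blast
    have tQ: "ts_of ?P ?Q = ?t" by (rule tsQ)
    have NB: False if j: "j < ?L" and sj: "SS ?P ?X (Suc j) < 1" and T: "?u j \<subseteq> T"
      and Tsub: "\<forall>w\<in>T. \<exists>g. M' g w = 1 \<and> (PW w (Some f) g \<or> g = Some f)"
      and cov: "\<forall>i. M' (Some f) i = 1 \<longrightarrow> (\<exists>c. Suc j \<le> c \<and> c < ?L \<and> 0 < ?t ! c \<and> i \<in> ?u c)" for j T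
    proof -
      have "SS ?P ?Q (Suc j) = SS ?P ?X (Suc j)" by (simp add: SS_def tQ)
      then have sQ: "SS ?P ?Q (Suc j) < 1" using sj by simp
      obtain i where i: "i \<in> ?u j" "ZZ ?P ?Q (Suc j) i = 0" using KEY[OF st Qnn j sQ] by blast
      have ZQ: "ZZ ?P ?Q (Suc j) i = ?Q i - ?X i + ZZ ?P ?X (Suc j) i" by (simp add: ZZ_def tQ)
      obtain g where g: "M' g i = 1" "PW i (Some f) g \<or> g = Some f" using Tsub T i(1) by blast
      show False
      proof (cases "g = Some f")
        case True
        then obtain c where c: "Suc j \<le> c" "c < ?L" "0 < ?t ! c" "i \<in> ?u c" using cov g by blast
        have "0 < ZZ ?P ?X c i" using pos_ZZ[OF st Xnn' c(2,3,4)] .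
        moreover have "ZZ ?P ?X c i \<le> ZZ ?P ?X (Suc j) i" using ZZ_mono[OF st Xnn' c(1)] c(2) by simp
        moreover have "?X i \<le> ?Q i" using A_le_ge[of M] Mnn by blast
        ultimately show False using i(2) ZQ by simp
      next
        case False
        have Mg: "0 < M g i" using M'pos g(1) by simp
        have "(\<Sum>fo\<in>{Some f, g}. M fo i) \<le> ?Q i"
          unfolding A_le_def by (rule sum_mono2) (use g Mnn in auto)
        then have "?X i + M g i \<le> ?Q i" using False by simp
        moreover have "0 \<le> ZZ ?P ?X (Suc j) i" using ZZ_nn[OF st Xnn'] j by simp
        ultimately show False using i(2) ZQ Mg by simp
      qed
    qed
    have shape: "(\<exists>k. k < ?L \<and> 0 < ?t ! k \<and> M' (Some f) = ind (?u k)) \<or> (M' (Some f) = (\<lambda>_. 0) \<and> sum_list ?t \<noteq> 1)"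
      using col_Some[OF j0(1)] j0(2) klist_nth[of j0 "PF f" "M (Some f)"] by auto
    have c1: "M' (Some f) = chhat ?P (M' (Some f))"
      using shape
    proof
      assume "\<exists>k. k < ?L \<and> 0 < ?t ! k \<and> M' (Some f) = ind (?u k)"
      then obtain k where k: "k < ?L" "0 < ?t ! k" "M' (Some f) = ind (?u k)" by blast
      have "\<forall>j<k. \<not> ?u j \<subseteq> ?u k"
      proof (intro allI impI notI)
        fix j assume jk: "j < k" and sub: "?u j \<subseteq> ?u k"
        show False by (rule NOSUB[OF st Xnn', of j]) (use jk k sub in auto)
      qed
      then have "chhat ?P (ind (?u k)) = ind (?u k)" by (intro chhat_ind_first[OF st k(1)]) auto
      then show ?thesis using k(3) by simp
    next
      assume "M' (Some f) = (\<lambda>_. 0) \<and> sum_list ?t \<noteq> 1"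
      moreover have "chhat ?P (ind {}) = (\<lambda>_. 0)"
        by (rule chhat_ind_none[OF st]) (use acc_nonempty[OF st] in auto)
      ultimately show ?thesis by (simp add: ind_empty)
    qed
    have c2: "\<forall>w. PW w None (Some f) \<longrightarrow> M' (Some f) w = 0"
    proof (intro allI impI)
      fix w assume pw: "PW w None (Some f)"
      show "M' (Some f) w = 0"
      proof (rule ccontr)
        assume "M' (Some f) w \<noteq> 0"
        then have "0 < M (Some f) w" by (rule M'pos)
        then show False using stab1b[OF pw] by simp
      qed
    qed
    let ?Q' = "A_le PW M' f"
    have M'nnall: "\<forall>fo w. 0 \<le> M' fo w" using M'nn by blast
    have Q'nn: "\<forall>i. 0 \<le> ?Q' i" using A_le_nn[OF M'nnall] by blast
    have Q'01: "?Q' w \<in> {0, 1}" for w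
    proof -
      have "?Q' w \<in> \<int>" unfolding A_le_def by (rule Ints_sum) (use M'int in auto)
      moreover have "?Q' w \<le> (\<Sum>fo\<in>UNIV. M' fo w)"
        unfolding A_le_def by (rule sum_mono2) (use M'nn in auto)
      ultimately show ?thesis using int01 Q'nn M'sum by simp
    qed
    define T where "T = {w. ?Q' w = 1}"
    have Q'T: "?Q' = ind T" using Q'01 by (auto simp: T_def ind_def fun_eq_iff)
    have Tsub: "\<forall>w\<in>T. \<exists>g. M' g w = 1 \<and> (PW w (Some f) g \<or> g = Some f)"
    proof
      fix w assume "w \<in> T"
      then have "?Q' w \<noteq> 0" by (simp add: T_def)
      then have "(\<Sum>f'\<in>{f'. PW w (Some f) f' \<or> f' = Some f}. M' f' w) \<noteq> 0" by (simp add: A_le_def)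
      then obtain g where g: "g \<in> {f'. PW w (Some f) f' \<or> f' = Some f}" "M' g w \<noteq> 0"
        by (rule sum.not_neutral_contains_not_neutral)
      then have "M' g w = 1" using M'01 by blast
      then show "\<exists>g. M' g w = 1 \<and> (PW w (Some f) g \<or> g = Some f)" using g by blast
    qed
    have M'fT: "M' (Some f) w = 1 \<Longrightarrow> w \<in> T" for w
    proof -
      assume "M' (Some f) w = 1"
      moreover have "M' (Some f) w \<le> ?Q' w" using A_le_ge[OF M'nnall] .
      ultimately show "w \<in> T" using Q'01[of w] by (auto simp: T_def)
    qed
    have chQ': "chhat ?P ?Q' = M' (Some f)"
      using shape
    proof
      assume "\<exists>k. k < ?L \<and> 0 < ?t ! k \<and> M' (Some f) = ind (?u k)"
      then obtain k where k: "k < ?L" "0 < ?t ! k" "M' (Some f) = ind (?u k)" by blast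
      have sub: "?u k \<subseteq> T" using M'fT k(3) by (auto simp: ind_def)
      have "\<forall>j<k. \<not> ?u j \<subseteq> T"
      proof (intro allI impI notI)
        fix j assume jk: "j < k" and subj: "?u j \<subseteq> T"
        have sj: "SS ?P ?X (Suc j) < 1" by (rule SS_lt1[OF st Xnn' k(1,2)]) (use jk in simp)
        show False
        proof (rule NB[OF _ sj subj Tsub])
          show "j < ?L" using jk k by simp
          show "\<forall>i. M' (Some f) i = 1 \<longrightarrow> (\<exists>c. Suc j \<le> c \<and> c < ?L \<and> 0 < ?t ! c \<and> i \<in> ?u c)"
          proof (intro allI impI)
            fix i assume "M' (Some f) i = 1"
            then have "i \<in> ?u k" using k(3) by (simp add: ind_def split: if_splits)
            then show "\<exists>c. Suc j \<le> c \<and> c < ?L \<and> 0 < ?t ! c \<and> i \<in> ?u c"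
              using k jk by (intro exI[of _ k]) auto
          qed
        qed
      qed
      then have "chhat ?P (ind T) = ind (?u k)" by (intro chhat_ind_first[OF st k(1) sub]) auto
      then show ?thesis using k(3) Q'T by simp
    next
      assume z0: "M' (Some f) = (\<lambda>_. 0) \<and> sum_list ?t \<noteq> 1"
      have "\<forall>j<?L. \<not> ?u j \<subseteq> T"
      proof (intro allI impI notI)
        fix j assume j: "j < ?L" and subj: "?u j \<subseteq> T"
        have "SS ?P ?X (Suc j) \<le> SS ?P ?X ?L" using SS_mono[OF st Xnn'] j by simp
        moreover have "SS ?P ?X ?L = sum_list ?t" using sum_ts[OF st Xnn'] by simp
        ultimately have sj: "SS ?P ?X (Suc j) < 1" using z0 sum_ts_le1[of f] by simp
        show False
          by (rule NB[OF j sj subj Tsub]) (use z0 in simp)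
      qed
      then have "chhat ?P (ind T) = (\<lambda>_. 0)" by (rule chhat_ind_none[OF st])
      then show ?thesis using z0 Q'T by simp
    qed
    have c3: "\<not> (\<exists>M''. (\<forall>w. 0 \<le> M'' w \<and> M'' w \<le> 1) \<and> firm_prefers ?P M'' (M' (Some f)) \<and> (\<forall>w. M'' w \<le> ?Q' w))"
    proof
      assume "\<exists>M''. (\<forall>w. 0 \<le> M'' w \<and> M'' w \<le> 1) \<and> firm_prefers ?P M'' (M' (Some f)) \<and> (\<forall>w. M'' w \<le> ?Q' w)"
      then obtain M'' where M'': "firm_prefers ?P M'' (M' (Some f))" "\<forall>w. M'' w \<le> ?Q' w" by blast
      have "chhat ?P (\<lambda>w. max (M'' w) (M' (Some f) w)) = chhat ?P ?Q'"
        by (rule IRC_chhat[OF st Q'nn]) (use chQ' M''(2) A_le_ge[OF M'nnall] in auto)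
      then show False using M''(1) chQ' unfolding firm_prefers_def by simp
    qed
    show ?thesis using c1 c2 c3 by blast
  qed
  have "is_matching M'" unfolding is_matching_def is_pseudo_def using M'nn M'le1 M'sum by blast
  moreover have "integral M'" unfolding integral_def using M'01 by blast
  moreover have "stable PW PF M'" unfolding stable_def using stabf by blast
  ultimately show ?thesis unfolding M'_def by blast
qed

end

theorem lemma6:
  fixes PW :: "'w::{finite,linorder} \<Rightarrow> 'f::finite option \<Rightarrow> 'f option \<Rightarrow> bool"
    and PF :: "'f \<Rightarrow> 'w set \<Rightarrow> 'w set \<Rightarrow> bool"
    and M :: "'f option \<Rightarrow> 'w \<Rightarrow> real"
  assumes "\<forall>w. strict_total (PW w)"
    and "\<forall>f. strict_total (PF f)"
    and "is_matching M"
    and "stable PW PF M"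
    and "totally_unimodular (\<Union>f. demand_type (PF f))"
  shows "\<exists>z :: 'f option \<Rightarrow> nat \<Rightarrow> real.
     (\<forall>fo j. j < length (Bstar PF M fo) \<longrightarrow> z fo j \<in> {0, 1}) \<and>
     (\<forall>r. (\<Sum>fo\<in>UNIV. \<Sum>j<length (Bstar PF M fo). z fo j * Bcol fo (Bstar PF M fo ! j) r) = 1) \<and>
     (let M' = (\<lambda>fo w. \<Sum>j<length (Bstar PF M fo). z fo j * (Bstar PF M fo ! j) w)
      in is_matching M' \<and> integral M' \<and> stable PW PF M')"
proof -
  obtain z :: "'f option \<Rightarrow> nat \<Rightarrow> real" where
    Z1: "\<forall>fo j. j < length (Bstar PF M fo) \<longrightarrow> z fo j \<in> {0, 1}" and
    Z2: "\<forall>r. (\<Sum>fo\<in>UNIV. \<Sum>j<length (Bstar PF M fo). z fo j * Bcol fo (Bstar PF M fo ! j) r) = 1"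
    using Z_exists[OF assms] by blast
  have "is_matching (\<lambda>fo w. \<Sum>j<length (Bstar PF M fo). z fo j * (Bstar PF M fo ! j) w) \<and>
         integral (\<lambda>fo w. \<Sum>j<length (Bstar PF M fo). z fo j * (Bstar PF M fo ! j) w) \<and>
         stable PW PF (\<lambda>fo w. \<Sum>j<length (Bstar PF M fo). z fo j * (Bstar PF M fo ! j) w)"
    by (rule Mprime_good[OF assms Z1 Z2])
  then show ?thesis using Z1 Z2 by (intro exI[of _ z]) (simp add: Let_def)
qed


end
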